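(* Let $v\in H^1$ satisfy $|v(x)|_{\mathbb R^3}=1$ for Lebesgue-a.e. $x\in\mathcal O$. Then the following equality holds in $(H^1)'$: $$v\times(v\times\Delta v)=-\Delta v-|\nabla v|_{\mathbb R^3}^2\,v.$$
   Context: $\mathcal O\subset\mathbb R$ is a bounded interval; $L^2$, $H^1$ are $\mathbb R^3$-valued spaces on $\mathcal O$, $(H^1)'$ the dual of $H^1$; $\times$ is the vector product in $\mathbb R^3$. For $v,\phi\in H^1$ the elements of $(H^1)'$ are defined by ${}_{(H^1)'}\langle\Delta v,\phi\rangle_{H^1}=-\langle\nabla v,\nabla\phi\rangle_{L^2}$, ${}_{(H^1)'}\langle v\times(v\times\Delta v),\phi\rangle_{H^1}=-\langle\nabla((\phi\times v)\times v),\nabla v\rangle_{L^2}$, and ${}_{(H^1)'}\langle|\nabla v|^2_{\mathbb R^3}v,\phi\rangle_{H^1}=\int_{\mathcal O}|\nabla v(x)|^2_{\mathbb R^3}\langle v(x),\phi(x)\rangle_{\mathbb R^3}\,dx$. *)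

theory Defs
  imports "HOL-Analysis.Analysis"
begin

definition test_fun :: "real set \<Rightarrow> (real \<Rightarrow> real) \<Rightarrow> bool" where
  "test_fun S \<psi> \<longleftrightarrow>
     (\<forall>n x. ((deriv ^^ n) \<psi>) differentiable (at x)) \<and>
     compact (closure {x. \<psi> x \<noteq> 0}) \<and> closure {x. \<psi> x \<noteq> 0} \<subseteq> S"

definition L2 :: "real set \<Rightarrow> (real \<Rightarrow> real^3) \<Rightarrow> bool" where
  "L2 S f \<longleftrightarrow> set_borel_measurable lborel S f \<and>
     set_integrable lborel S (\<lambda>x. (norm (f x))\<^sup>2)"

definition weak_deriv :: "real set \<Rightarrow> (real \<Rightarrow> real^3) \<Rightarrow> (real \<Rightarrow> real^3) \<Rightarrow> bool" where
  "weak_deriv S f g \<longleftrightarrow> set_integrable lborel S f \<and> set_integrable lborel S g \<and>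
     (\<forall>\<psi>. test_fun S \<psi> \<longrightarrow>
        (LINT x:S|lborel. deriv \<psi> x *\<^sub>R f x) = - (LINT x:S|lborel. \<psi> x *\<^sub>R g x))"

definition H1_grad :: "real set \<Rightarrow> (real \<Rightarrow> real^3) \<Rightarrow> (real \<Rightarrow> real^3) \<Rightarrow> bool" where
  "H1_grad S f g \<longleftrightarrow> L2 S f \<and> L2 S g \<and> weak_deriv S f g"

end

theory Submission
  imports Defs "HOL-Computational_Algebra.Polynomial"
begin

definition smooth :: "(real \<Rightarrow> real) \<Rightarrow> bool" where
  "smooth f \<longleftrightarrow> (\<forall>n x. (deriv ^^ n) f differentiable (at x))"

lemma funpow_deriv_Suc: "(deriv ^^ Suc n) f = (deriv ^^ n) (deriv f)"
  by (simp only: funpow_Suc_right comp_apply)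

lemma smooth_iff: "smooth f \<longleftrightarrow> (\<forall>x. f differentiable (at x)) \<and> smooth (deriv f)"
  unfolding smooth_def
proof safe
  fix n x assume "\<forall>x. f differentiable at x" "\<forall>n x. (deriv ^^ n) (deriv f) differentiable at x"
  then show "(deriv ^^ n) f differentiable at x"
    by (cases n) (simp, metis funpow_deriv_Suc)
next
  fix n x assume "\<forall>n x. (deriv ^^ n) f differentiable at x"
  then show "(deriv ^^ n) (deriv f) differentiable at x"
    by (metis funpow_deriv_Suc)
next
  fix x assume "\<forall>n x. (deriv ^^ n) f differentiable at x"
  then show "f differentiable at x" by (metis funpow_0)
qed

lemma smooth_differentiable: "smooth f \<Longrightarrow> f differentiable (at x)"
  using smooth_iff by blast

lemma smooth_deriv: "smooth f \<Longrightarrow> smooth (deriv f)"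
  using smooth_iff by blast

lemma smooth_DERIV: "smooth f \<Longrightarrow> (f has_real_derivative deriv f x) (at x)"
  using smooth_differentiable DERIV_deriv_iff_real_differentiable by blast

lemma smooth_continuous: "smooth f \<Longrightarrow> continuous_on A f"
  by (meson continuous_at_imp_continuous_on differentiable_imp_continuous_within smooth_differentiable)

lemma deriv_const_fun: "deriv (\<lambda>_. k) = (\<lambda>_. 0::real)"
  by (rule ext, rule DERIV_imp_deriv, rule DERIV_const)

lemma smooth_const: "smooth (\<lambda>_. c)"
proof -
  have "(deriv ^^ n) (\<lambda>_. c) = (\<lambda>_. if n = 0 then c else 0)" for n
    by (induction n) (simp_all add: deriv_const_fun)
  then show ?thesis unfolding smooth_def by simp
qed

lemma deriv_add_weak:
  fixes f g :: "real \<Rightarrow> real"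
  assumes "\<forall>m<n. \<forall>x. (deriv ^^ m) f differentiable (at x)"
    and "\<forall>m<n. \<forall>x. (deriv ^^ m) g differentiable (at x)"
  shows "(deriv ^^ n) (\<lambda>x. f x + g x) = (\<lambda>x. (deriv ^^ n) f x + (deriv ^^ n) g x)"
  using assms
proof (induction n)
  case 0 then show ?case by simp
next
  case (Suc n)
  have "(deriv ^^ Suc n) (\<lambda>x. f x + g x) = deriv ((deriv ^^ n) (\<lambda>x. f x + g x))" by simp
  also have "\<dots> = deriv (\<lambda>x. (deriv ^^ n) f x + (deriv ^^ n) g x)"
    using Suc by simp
  also have "\<dots> = (\<lambda>x. (deriv ^^ Suc n) f x + (deriv ^^ Suc n) g x)"
  proof
    fix x
    have "((\<lambda>x. (deriv ^^ n) f x + (deriv ^^ n) g x) has_real_derivative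
        deriv ((deriv ^^ n) f) x + deriv ((deriv ^^ n) g) x) (at x)"
      using Suc.prems by (intro DERIV_add) (auto simp: DERIV_deriv_iff_real_differentiable)
    then show "deriv (\<lambda>x. (deriv ^^ n) f x + (deriv ^^ n) g x) x = (deriv ^^ Suc n) f x + (deriv ^^ Suc n) g x"
      by (simp add: DERIV_imp_deriv)
  qed
  finally show ?case .
qed

lemma smooth_add: "smooth f \<Longrightarrow> smooth g \<Longrightarrow> smooth (\<lambda>x. f x + g x)"
  unfolding smooth_def
  by (subst deriv_add_weak) (auto intro: differentiable_add simp: smooth_def)

lemma deriv_mult_fun:
  assumes "smooth f" "smooth g"
  shows "deriv (\<lambda>x. f x * g x) = (\<lambda>x. deriv f x * g x + f x * deriv g x)"
proof
  fix x
  have "((\<lambda>x. f x * g x) has_real_derivative deriv f x * g x + f x * deriv g x) (at x)"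
    using DERIV_mult[OF smooth_DERIV[OF assms(1)] smooth_DERIV[OF assms(2)]] by (simp add: ac_simps)
  then show "deriv (\<lambda>x. f x * g x) x = deriv f x * g x + f x * deriv g x"
    by (rule DERIV_imp_deriv)
qed

lemma smooth_mult_aux:
  "\<forall>f g. smooth f \<longrightarrow> smooth g \<longrightarrow> (\<forall>x. (deriv ^^ n) (\<lambda>x. f x * g x) differentiable (at x))"
proof (induction n rule: less_induct)
  case (less n)
  show ?case
  proof (cases n)
    case 0
    show ?thesis
    proof (intro allI impI)
      fix f g x assume "smooth f" "smooth g"
      then show "(deriv ^^ n) (\<lambda>x. f x * g x) differentiable (at x)"
        using 0 by (simp, intro differentiable_mult smooth_differentiable)
    qed
  next
    case (Suc m)
    show ?thesis
    proof (intro allI impI)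
      fix f g x assume f: "smooth f" and g: "smooth g"
      have "(deriv ^^ n) (\<lambda>x. f x * g x) = (deriv ^^ m) (\<lambda>x. deriv f x * g x + f x * deriv g x)"
        by (simp only: Suc funpow_deriv_Suc deriv_mult_fun[OF f g])
      also have "\<dots> = (\<lambda>x. (deriv ^^ m) (\<lambda>x. deriv f x * g x) x + (deriv ^^ m) (\<lambda>x. f x * deriv g x) x)"
        using less Suc f g smooth_deriv by (intro deriv_add_weak) auto
      finally show "(deriv ^^ n) (\<lambda>x. f x * g x) differentiable (at x)"
        using less Suc f g smooth_deriv by (auto intro!: differentiable_add)
    qed
  qed
qed

lemma smooth_mult: "smooth f \<Longrightarrow> smooth g \<Longrightarrow> smooth (\<lambda>x. f x * g x)"
  using smooth_mult_aux unfolding smooth_def by blast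

lemma smooth_cmult: "smooth f \<Longrightarrow> smooth (\<lambda>x. c * f x)"
  using smooth_mult[OF smooth_const] by blast

lemma smooth_diff: "smooth f \<Longrightarrow> smooth g \<Longrightarrow> smooth (\<lambda>x. f x - g x)"
  using smooth_add[of f "\<lambda>x. (-1) * g x"] smooth_cmult[of g "-1"] by simp

lemma smooth_power: "smooth f \<Longrightarrow> smooth (\<lambda>x. f x ^ n)"
  by (induction n) (auto intro: smooth_const smooth_mult)

lemma smooth_affine:
  assumes "smooth f"
  shows "smooth (\<lambda>x. f (s * x + c))"
proof -
  have D: "(deriv ^^ n) (\<lambda>x. f (s * x + c)) = (\<lambda>x. s ^ n * (deriv ^^ n) f (s * x + c))" for n
  proof (induction n)
    case 0 then show ?case by simp
  next
    case (Suc n)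
    show ?case
    proof
      fix x
      have d: "((deriv ^^ n) f has_real_derivative deriv ((deriv ^^ n) f) (s * x + c)) (at (s * x + c))"
        using assms unfolding smooth_def by (simp add: DERIV_deriv_iff_real_differentiable)
      have "((\<lambda>x. s ^ n * (deriv ^^ n) f (s * x + c)) has_real_derivative
              s ^ n * (deriv ((deriv ^^ n) f) (s * x + c) * s)) (at x)"
      proof (intro DERIV_cmult DERIV_chain2[where g="\<lambda>x. s * x + c", OF d])
        show "((\<lambda>x. s * x + c) has_real_derivative s) (at x)"
          by (auto intro!: derivative_eq_intros)
      qed
      then show "(deriv ^^ Suc n) (\<lambda>x. f (s * x + c)) x = s ^ Suc n * (deriv ^^ Suc n) f (s * x + c)"
        using Suc by (simp add: DERIV_imp_deriv algebra_simps)
    qed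
  qed
  show ?thesis unfolding smooth_def D
  proof (intro allI)
    fix n x
    have "(deriv ^^ n) f differentiable at (s * x + c)"
      using assms unfolding smooth_def by blast
    then have "((deriv ^^ n) f \<circ> (\<lambda>x. s * x + c)) differentiable at x"
      by (intro differentiable_chain_at) (auto intro!: derivative_intros)
    then show "(\<lambda>x. s ^ n * (deriv ^^ n) f (s * x + c)) differentiable at x"
      by (auto simp: o_def intro!: differentiable_mult)
  qed
qed

definition Fp :: "real poly \<Rightarrow> real \<Rightarrow> real" where
  "Fp p t = (if t > 0 then poly p (1/t) * exp (-1/t) else 0)"

definition Qp :: "real poly \<Rightarrow> real poly" where
  "Qp p = [:0,0,1:] * (p - pderiv p)"

lemma poly_exp_tendsto: "((\<lambda>y. poly p y * exp (-y)) \<longlongrightarrow> 0) at_top" for p :: "real poly"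
proof -
  have "((\<lambda>y. \<Sum>i\<le>degree p. coeff p i * (y ^ i / exp y)) \<longlongrightarrow> (\<Sum>i\<le>degree p. coeff p i * 0)) at_top"
    by (intro tendsto_sum tendsto_mult tendsto_const tendsto_power_div_exp_0)
  moreover have "(\<Sum>i\<le>degree p. coeff p i * (y ^ i / exp y)) = poly p y * exp (-y)" for y
    by (simp add: poly_altdef sum_distrib_right exp_minus divide_inverse mult.assoc)
  ultimately show ?thesis by simp
qed

lemma Fp_tendsto0: "(Fp p \<longlongrightarrow> 0) (at 0)"
proof (subst filterlim_at_split, intro conjI)
  show "(Fp p \<longlongrightarrow> 0) (at_left 0)"
  proof (rule tendsto_eventually)
    show "\<forall>\<^sub>F x in at_left 0. Fp p x = 0"
      by (auto simp: eventually_at_left_field Fp_def intro!: exI[of _ "-1"])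
  qed
  have "((\<lambda>t. poly p (inverse t) * exp (- inverse t)) \<longlongrightarrow> 0) (at_right 0)"
    using filterlim_compose[OF poly_exp_tendsto filterlim_inverse_at_top_right] by simp
  then show "(Fp p \<longlongrightarrow> 0) (at_right 0)"
  proof (rule Lim_transform_eventually)
    show "\<forall>\<^sub>F x in at_right 0. poly p (inverse x) * exp (- inverse x) = Fp p x"
      by (auto simp: eventually_at_right_field Fp_def divide_inverse intro!: exI[of _ 1])
  qed
qed

lemma Fp_DERIV: "(Fp p has_real_derivative Fp (Qp p) x) (at x)"
proof (cases x "0::real" rule: linorder_cases)
  case less
  show ?thesis
  proof (rule has_field_derivative_transform_within_open[where S="{..<0}"])
    show "((\<lambda>_. 0) has_real_derivative Fp (Qp p) x) (at x)"
      using less by (simp add: Fp_def)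
  qed (use less in \<open>auto simp: Fp_def\<close>)
next
  case greater
  show ?thesis
  proof (rule has_field_derivative_transform_within_open[where S="{0<..}"])
    have "((\<lambda>t. poly p (1/t) * exp (-1/t)) has_real_derivative
        poly (pderiv p) (1/x) * (- 1 / x^2) * exp (-1/x) + poly p (1/x) * (exp (-1/x) * (1 / x^2))) (at x)"
      using greater
      by (auto intro!: derivative_eq_intros DERIV_chain2[where f="poly p" and g="\<lambda>t. 1/t", OF poly_DERIV]
          simp: power2_eq_square field_simps)
    moreover have "poly (pderiv p) (1/x) * (- 1 / x^2) * exp (-1/x) + poly p (1/x) * (exp (-1/x) * (1 / x^2))
        = Fp (Qp p) x"
      using greater by (simp add: Fp_def Qp_def algebra_simps power2_eq_square)
    ultimately show "((\<lambda>t. poly p (1/t) * exp (-1/t)) has_real_derivative Fp (Qp p) x) (at x)"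
      by simp
  qed (use greater in \<open>auto simp: Fp_def\<close>)
next
  case equal
  have "((\<lambda>h. (Fp p (0 + h) - Fp p 0) / h) \<longlongrightarrow> 0) (at 0)"
  proof -
    have "(\<lambda>h. (Fp p (0 + h) - Fp p 0) / h) = Fp (pCons 0 p)"
      by (auto simp: Fp_def fun_eq_iff divide_inverse)
    then show ?thesis using Fp_tendsto0 by simp
  qed
  then show ?thesis using equal
    by (simp add: DERIV_def Fp_def)
qed

lemma deriv_Fp: "deriv (Fp p) = Fp (Qp p)"
  using Fp_DERIV DERIV_imp_deriv by blast

lemma smooth_Fp: "smooth (Fp p)"
proof -
  have "(deriv ^^ n) (Fp p) = Fp ((Qp ^^ n) p)" for n
    by (induction n) (simp_all add: deriv_Fp)
  then show ?thesis
    unfolding smooth_def using Fp_DERIV real_differentiable_def by metis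
qed

definition Ef :: "real \<Rightarrow> real" where "Ef = Fp 1"

lemma Ef_simp: "Ef t = (if t > 0 then exp (-1/t) else 0)"
  by (simp add: Ef_def Fp_def)

lemma smooth_Ef: "smooth Ef" unfolding Ef_def by (rule smooth_Fp)

lemma Ef_pos_iff: "Ef t > 0 \<longleftrightarrow> t > 0" by (simp add: Ef_simp)
lemma Ef_nonneg: "Ef t \<ge> 0" by (simp add: Ef_simp)
lemma Ef_le1: "Ef t \<le> 1" by (simp add: Ef_simp)
lemma Ef_mono: "t \<le> t' \<Longrightarrow> Ef t \<le> Ef t'"
  by (auto simp: Ef_simp frac_le)

definition bump :: "real \<Rightarrow> real \<Rightarrow> real \<Rightarrow> real" where
  "bump c d x = Ef (x - c) * Ef (d - x)"

lemma smooth_bump: "smooth (bump c d)"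
proof -
  have 1: "smooth (\<lambda>x. Ef (1 * x + - c))" by (rule smooth_affine[OF smooth_Ef])
  have 2: "smooth (\<lambda>x. Ef ((-1) * x + d))" by (rule smooth_affine[OF smooth_Ef])
  have "smooth (\<lambda>x. Ef (1 * x + - c) * Ef ((-1) * x + d))" by (rule smooth_mult[OF 1 2])
  then show ?thesis unfolding bump_def[abs_def] by simp
qed

lemma bump_pos_iff: "bump c d x > 0 \<longleftrightarrow> c < x \<and> x < d"
  unfolding bump_def
  by (metis Ef_nonneg Ef_pos_iff diff_gt_0_iff_gt mult_pos_pos order_less_le zero_less_mult_iff)

lemma bump_nonneg: "bump c d x \<ge> 0" by (simp add: bump_def Ef_nonneg)
lemma bump_le1: "bump c d x \<le> 1"
  unfolding bump_def by (meson Ef_le1 Ef_nonneg mult_le_one)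

lemma bump_zero: "\<not> (c < x \<and> x < d) \<Longrightarrow> bump c d x = 0"
  using bump_pos_iff bump_nonneg by (metis order_less_le)

lemma test_funI:
  assumes "smooth \<psi>" "\<And>x. \<psi> x \<noteq> 0 \<Longrightarrow> c \<le> x \<and> x \<le> d" "a < c" "d < b"
  shows "test_fun {a<..<b} \<psi>"
proof -
  have sub: "{x. \<psi> x \<noteq> 0} \<subseteq> {c..d}" using assms(2) by auto
  then have cl: "closure {x. \<psi> x \<noteq> 0} \<subseteq> {c..d}"
    by (simp add: closure_minimal)
  have "bounded {x. \<psi> x \<noteq> 0}" using sub bounded_subset bounded_closed_interval by blast
  then show ?thesis
    unfolding test_fun_def using assms(1,3,4) cl unfolding smooth_def by auto
qed

definition psi :: "real \<Rightarrow> real \<Rightarrow> nat \<Rightarrow> real \<Rightarrow> real" where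
  "psi c d n x = 1 - (1 - bump c d x) ^ n"

lemma smooth_psi: "smooth (psi c d n)"
  unfolding psi_def[abs_def]
  by (intro smooth_diff smooth_const smooth_power smooth_bump)

lemma psi_zero: "\<not> (c < x \<and> x < d) \<Longrightarrow> psi c d n x = 0"
  by (simp add: psi_def bump_zero)

lemma psi_bound: "\<bar>psi c d n x\<bar> \<le> 1"
proof -
  have "0 \<le> 1 - bump c d x" "1 - bump c d x \<le> 1" using bump_nonneg bump_le1 by auto
  then have "0 \<le> (1 - bump c d x) ^ n" "(1 - bump c d x) ^ n \<le> 1"
    by (auto intro: power_le_one)
  then show ?thesis by (simp add: psi_def)
qed

lemma test_psi: "a < c \<Longrightarrow> d < b \<Longrightarrow> test_fun {a<..<b} (psi c d n)"
  by (rule test_funI[OF smooth_psi, of c d]) (auto intro: psi_zero)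

definition cs :: "real \<Rightarrow> real \<Rightarrow> nat \<Rightarrow> real" where "cs c d n = c + (d - c) / (real n + 3)"
definition ds :: "real \<Rightarrow> real \<Rightarrow> nat \<Rightarrow> real" where "ds c d n = d - (d - c) / (real n + 3)"

lemma cs_ds: 
  assumes "c < d"
  shows "c < cs c d n" "cs c d n < ds c d n" "ds c d n < d"
proof -
  define e where "e = (d - c) / (real n + 3)"
  have f: "e > 0" "cs c d n = c + e" "ds c d n = d - e"
    using assms by (auto simp: e_def cs_def ds_def)
  have "e * (real n + 3) = d - c" unfolding e_def by simp
  moreover have "e * 3 \<le> e * (real n + 3)" using f by (intro mult_left_mono) auto
  ultimately have "e * 3 \<le> d - c" by simp
  note f = f this
  show "c < cs c d n" using f by linarith
  show "cs c d n < ds c d n" using f by linarith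
  show "ds c d n < d" using f by linarith
qed

lemma cs_mono: "c < d \<Longrightarrow> m \<le> n \<Longrightarrow> cs c d n \<le> cs c d m"
  unfolding cs_def by (auto intro!: divide_left_mono)
lemma ds_mono: "c < d \<Longrightarrow> m \<le> n \<Longrightarrow> ds c d m \<le> ds c d n"
  unfolding ds_def by (auto intro!: divide_left_mono)

lemma psi_seq_lim:
  assumes "c < d"
  shows "(\<lambda>n. psi (cs c d n) (ds c d n) n x) \<longlonglongrightarrow> indicator {c<..<d} x"
proof (cases "c < x \<and> x < d")
  case False
  then have "psi (cs c d n) (ds c d n) n x = 0" for n
    using cs_ds[OF assms, of n] by (intro psi_zero) auto
  then show ?thesis using False by simp
next
  case True
  have "(\<lambda>n. (d - c) / (real n + 3)) \<longlonglongrightarrow> 0"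
    by real_asymp
  moreover have "min (x - c) (d - x) > 0" using True by auto
  ultimately obtain N where N: "\<forall>n\<ge>N. \<bar>(d - c) / (real n + 3)\<bar> < min (x - c) (d - x)"
    by (metis (no_types, lifting) LIMSEQ_def dist_real_def diff_zero real_norm_def)
  have "\<bar>(d - c) / (real N + 3)\<bar> < min (x - c) (d - x)" using N by simp
  then have "(d - c) / (real N + 3) < min (x - c) (d - x)" using assms by simp
  then have xin: "cs c d N < x \<and> x < ds c d N" by (auto simp: cs_def ds_def)
  define r where "r = 1 - bump (cs c d N) (ds c d N) x"
  have r: "0 \<le> r" "r < 1" using bump_le1 bump_pos_iff[of "cs c d N" "ds c d N" x] xin
    by (auto simp: r_def)
  have le: "(1 - bump (cs c d n) (ds c d n) x) ^ n \<le> r ^ n" if "n \<ge> N" for n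
  proof (rule power_mono)
    have "Ef (x - cs c d N) \<le> Ef (x - cs c d n)" "Ef (ds c d N - x) \<le> Ef (ds c d n - x)"
      using cs_mono[OF assms that] ds_mono[OF assms that] by (auto intro!: Ef_mono)
    then have "bump (cs c d N) (ds c d N) x \<le> bump (cs c d n) (ds c d n) x"
      unfolding bump_def by (intro mult_mono) (auto simp: Ef_nonneg)
    then show "1 - bump (cs c d n) (ds c d n) x \<le> r" by (simp add: r_def)
    show "0 \<le> 1 - bump (cs c d n) (ds c d n) x" using bump_le1 by simp
  qed
  have "(\<lambda>n. (1 - bump (cs c d n) (ds c d n) x) ^ n) \<longlonglongrightarrow> 0"
  proof (rule tendsto_sandwich[of "\<lambda>_. 0" _ _ "\<lambda>n. r ^ n"])
    show "\<forall>\<^sub>F n in sequentially. 0 \<le> (1 - bump (cs c d n) (ds c d n) x) ^ n"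
      using bump_le1 by simp
    show "\<forall>\<^sub>F n in sequentially. (1 - bump (cs c d n) (ds c d n) x) ^ n \<le> r ^ n"
      using le by (auto simp: eventually_sequentially)
    show "(\<lambda>n. r ^ n) \<longlonglongrightarrow> 0" using r by (intro LIMSEQ_power_zero) auto
  qed simp
  then have "(\<lambda>n. 1 - (1 - bump (cs c d n) (ds c d n) x) ^ n) \<longlonglongrightarrow> 1 - 0"
    by (intro tendsto_diff tendsto_const)
  then show ?thesis using True by (simp add: psi_def)
qed

lemma set_integrable_bounded_linear:
  fixes f :: "_ \<Rightarrow> 'a::euclidean_space"
  assumes T: "bounded_linear T" and f: "set_integrable M A f"
  shows "set_integrable M A (\<lambda>x. (T (f x) :: 'b::euclidean_space))"
proof -
  have "integrable M (\<lambda>x. T (indicator A x *\<^sub>R f x))"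
    using integrable_bounded_linear[OF T] f unfolding set_integrable_def by blast
  moreover have "T (indicator A x *\<^sub>R f x) = indicator A x *\<^sub>R T (f x)" for x
    using T by (simp add: linear_simps)
  ultimately show ?thesis unfolding set_integrable_def by simp
qed

lemma set_integral_bounded_linear:
  fixes f :: "_ \<Rightarrow> 'a::euclidean_space"
  assumes T: "bounded_linear T" and f: "set_integrable M A f"
  shows "(LINT x:A|M. (T (f x) :: 'b::euclidean_space)) = T (LINT x:A|M. f x)"
proof -
  have "T (indicator A x *\<^sub>R f x) = indicator A x *\<^sub>R T (f x)" for x
    using T by (simp add: linear_simps)
  then have "(LINT x:A|M. T (f x)) = integral\<^sup>L M (\<lambda>x. T (indicator A x *\<^sub>R f x))"
    unfolding set_lebesgue_integral_def by simp
  also have "\<dots> = T (LINT x:A|M. f x)"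
    using integral_bounded_linear[OF T] f unfolding set_integrable_def set_lebesgue_integral_def by blast
  finally show ?thesis .
qed

lemma interval_integral_zero:
  fixes h :: "real \<Rightarrow> 'c::euclidean_space"
  assumes hi: "set_integrable lborel {a<..<b} h"
    and orth: "\<And>\<psi>. test_fun {a<..<b} \<psi> \<Longrightarrow> (LINT x:{a<..<b}|lborel. \<psi> x *\<^sub>R h x) = 0"
    and cd: "a \<le> c" "c < d" "d \<le> b"
  shows "(LINT x:{c<..<d}|lborel. h x) = 0"
proof -
  define H where "H x = indicator {a<..<b} x *\<^sub>R h x" for x
  have Hi: "integrable lborel H" using hi unfolding set_integrable_def H_def by simp
  then have Hm[measurable]: "H \<in> borel_measurable lborel" by auto
  define s where "s n x = psi (cs c d n) (ds c d n) n x *\<^sub>R H x" for n x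
  define f where "f x = indicator {c<..<d} x *\<^sub>R H x" for x
  have f_eq: "f x = indicator {c<..<d} x *\<^sub>R h x" for x
    using cd by (auto simp: f_def H_def indicator_def)
  have psim: "psi (cs c d n) (ds c d n) n \<in> borel_measurable lborel" for n
    using smooth_continuous[OF smooth_psi] by (simp add: borel_measurable_continuous_onI)
  have s0: "integral\<^sup>L lborel (s n) = 0" for n
  proof -
    have "integral\<^sup>L lborel (s n) = (LINT x:{a<..<b}|lborel. psi (cs c d n) (ds c d n) n x *\<^sub>R h x)"
      unfolding set_lebesgue_integral_def s_def H_def by (simp add: mult.commute)
    also have "\<dots> = 0"
      using cs_ds[OF cd(2), of n] cd by (intro orth test_psi) auto
    finally show ?thesis .
  qed
  have "(\<lambda>n. integral\<^sup>L lborel (s n)) \<longlonglongrightarrow> integral\<^sup>L lborel f"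
  proof (rule integral_dominated_convergence[where w="\<lambda>x. norm (H x)"])
    show "f \<in> borel_measurable lborel" unfolding f_def by measurable
    show "s n \<in> borel_measurable lborel" for n unfolding s_def using psim[of n] by measurable
    show "integrable lborel (\<lambda>x. norm (H x))" using Hi by simp
    show "AE x in lborel. (\<lambda>n. s n x) \<longlonglongrightarrow> f x"
      unfolding s_def f_def by (intro AE_I2 tendsto_scaleR psi_seq_lim cd tendsto_const)
    show "AE x in lborel. norm (s n x) \<le> norm (H x)" for n
      unfolding s_def using psi_bound by (intro AE_I2) (auto intro!: mult_left_le_one_le)
  qed
  then have "integral\<^sup>L lborel f = 0" using s0 LIMSEQ_unique by (simp add: LIMSEQ_const_iff)
  moreover have "f = (\<lambda>x. indicator {c<..<d} x *\<^sub>R h x)" using f_eq by auto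
  ultimately show ?thesis unfolding set_lebesgue_integral_def by simp
qed

lemma ae_zero_from_intervals:
  fixes h :: "real \<Rightarrow> real"
  assumes hi: "set_integrable lborel {a<..<b} h" and ab: "a < b"
    and iv: "\<And>c d. a \<le> c \<Longrightarrow> c < d \<Longrightarrow> d \<le> b \<Longrightarrow> (LINT x:{c<..<d}|lborel. h x) = 0"
  shows "AE x in lborel. x \<in> {a<..<b} \<longrightarrow> h x = 0"
proof -
  define S where "S = {a<..<b}"
  define H where "H x = indicator S x * h x" for x
  have Hi: "integrable lborel H" using hi unfolding set_integrable_def H_def S_def by simp
  then have [measurable]: "H \<in> borel_measurable lborel" by auto
  define p where "p x = max 0 (H x)" for x
  define n where "n x = max 0 (- H x)" for x
  have pi: "integrable lborel p" unfolding p_def using Hi by (intro integrable_max) auto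
  have ni: "integrable lborel n" unfolding n_def using Hi by (intro integrable_max) auto
  have [measurable]: "p \<in> borel_measurable lborel" "n \<in> borel_measurable lborel"
    using pi ni by auto
  have key: "integral\<^sup>L lborel (\<lambda>y. p y * indicator {x<..} y) = integral\<^sup>L lborel (\<lambda>y. n y * indicator {x<..} y)" for x
  proof -
    have pni: "integrable lborel (\<lambda>y. p y * indicator {x<..} y)" "integrable lborel (\<lambda>y. n y * indicator {x<..} y)"
      using pi ni by (auto intro: integrable_real_mult_indicator)
    have "integral\<^sup>L lborel (\<lambda>y. p y * indicator {x<..} y) - integral\<^sup>L lborel (\<lambda>y. n y * indicator {x<..} y)
        = integral\<^sup>L lborel (\<lambda>y. indicator {x<..} y * H y)"
    proof -
      have "integral\<^sup>L lborel (\<lambda>y. p y * indicator {x<..} y) - integral\<^sup>L lborel (\<lambda>y. n y * indicator {x<..} y)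
         = integral\<^sup>L lborel (\<lambda>y. p y * indicator {x<..} y - n y * indicator {x<..} y)"
        using pni by (rule Bochner_Integration.integral_diff[symmetric])
      also have "\<dots> = integral\<^sup>L lborel (\<lambda>y. indicator {x<..} y * H y)"
        by (intro Bochner_Integration.integral_cong) (auto simp: p_def n_def split: split_max)
      finally show ?thesis .
    qed
    also have "\<dots> = 0"
    proof (cases "x < b")
      case True
      define c where "c = max a x"
      have "(\<lambda>y. indicator {x<..} y * H y) = (\<lambda>y. indicator {c<..<b} y *\<^sub>R h y)"
        by (auto simp: H_def S_def c_def indicator_def fun_eq_iff)
      moreover have "(LINT y:{c<..<b}|lborel. h y) = 0"
        using True ab by (intro iv) (auto simp: c_def)
      ultimately show ?thesis unfolding set_lebesgue_integral_def by simp
    next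
      case False
      then have "(\<lambda>y. indicator {x<..} y * H y) = (\<lambda>_. 0)"
        by (auto simp: H_def S_def indicator_def fun_eq_iff)
      then show ?thesis by simp
    qed
    finally show ?thesis by simp
  qed
  have "density lborel (\<lambda>x. ennreal (p x)) = density lborel (\<lambda>x. ennreal (n x))"
  proof (rule measure_eqI_lessThan)
    show "sets (density lborel (\<lambda>x. ennreal (p x))) = sets borel" by simp
    show "sets (density lborel (\<lambda>x. ennreal (n x))) = sets borel" by simp
    have em: "emeasure (density lborel (\<lambda>x. ennreal (q x))) {x<..} = ennreal (integral\<^sup>L lborel (\<lambda>y. q y * indicator {x<..} y))"
      if qi: "integrable lborel q" and qn: "\<And>y. q y \<ge> 0" for q :: "real \<Rightarrow> real" and x :: real
    proof -
      have [measurable]: "q \<in> borel_measurable lborel" using qi by auto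
      have "emeasure (density lborel (\<lambda>x. ennreal (q x))) {x<..} = (\<integral>\<^sup>+ y. ennreal (q y * indicator {x<..} y) \<partial>lborel)"
        using borel_open[OF open_greaterThan, of x] by (subst emeasure_density) (auto intro!: nn_integral_cong simp: indicator_def)
      also have "\<dots> = ennreal (integral\<^sup>L lborel (\<lambda>y. q y * indicator {x<..} y))"
        using qi qn by (intro nn_integral_eq_integral) (auto intro: integrable_real_mult_indicator)
      finally show ?thesis .
    qed
    show "emeasure (density lborel (\<lambda>x. ennreal (p x))) {x<..} < \<infinity>" for x
      using em[OF pi, of x] by (simp add: p_def)
    show "emeasure (density lborel (\<lambda>x. ennreal (p x))) {x<..} = emeasure (density lborel (\<lambda>x. ennreal (n x))) {x<..}" for x
      using em[OF pi, of x] em[OF ni, of x] key[of x] by (simp add: p_def n_def)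
  qed
  then have "AE x in lborel. ennreal (p x) = ennreal (n x)"
    by (subst (asm) sigma_finite_measure.density_unique_iff[OF sigma_finite_lborel]) auto
  then show ?thesis
  proof (rule AE_mp, intro AE_I2 impI)
    fix x assume "ennreal (p x) = ennreal (n x)" "x \<in> {a<..<b}"
    then have "p x = n x" by (simp add: p_def n_def)
    then show "h x = 0" using \<open>x \<in> {a<..<b}\<close> by (auto simp: p_def n_def H_def S_def split: split_max)
  qed
qed

lemma fundamental_lemma:
  fixes h :: "real \<Rightarrow> 'c::euclidean_space"
  assumes ab: "a < b" and hi: "set_integrable lborel {a<..<b} h"
    and orth: "\<And>\<psi>. test_fun {a<..<b} \<psi> \<Longrightarrow> (LINT x:{a<..<b}|lborel. \<psi> x *\<^sub>R h x) = 0"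
  shows "AE x in lborel. x \<in> {a<..<b} \<longrightarrow> h x = 0"
proof -
  have "AE x in lborel. \<forall>i\<in>Basis. x \<in> {a<..<b} \<longrightarrow> h x \<bullet> i = 0"
  proof (rule AE_finite_allI[OF finite_Basis])
    fix i :: 'c assume i: "i \<in> Basis"
    have bl: "bounded_linear (\<lambda>y::'c. y \<bullet> i)" by (rule bounded_linear_inner_left)
    show "AE x in lborel. x \<in> {a<..<b} \<longrightarrow> h x \<bullet> i = 0"
    proof (rule ae_zero_from_intervals[OF set_integrable_bounded_linear[OF bl hi] ab])
      fix c d assume cd: "a \<le> c" "c < d" "d \<le> b"
      have hcd: "set_integrable lborel {c<..<d} h"
        using cd by (intro set_integrable_subset[OF hi]) auto
      have "(LINT x:{c<..<d}|lborel. h x \<bullet> i) = (LINT x:{c<..<d}|lborel. h x) \<bullet> i"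
        by (rule set_integral_bounded_linear[OF bl hcd])
      also have "\<dots> = 0" using interval_integral_zero[OF hi orth cd] by simp
      finally show "(LINT x:{c<..<d}|lborel. h x \<bullet> i) = 0" .
    qed
  qed
  then show ?thesis
    by (rule AE_mp) (auto intro!: AE_I2 simp: euclidean_all_zero_iff)
qed

lemma set_integrable_imp_meas:
  "set_integrable M A (f :: _ \<Rightarrow> 'b::{banach, second_countable_topology}) \<Longrightarrow> set_borel_measurable M A f"
  unfolding set_integrable_def set_borel_measurable_def by (rule borel_measurable_integrable)

lemma continuous_on_UNIV_bilinear:
  fixes bop :: "'a::real_normed_vector \<Rightarrow> 'b::real_normed_vector \<Rightarrow> 'c::real_normed_vector"
  assumes "bounded_bilinear bop"
  shows "continuous_on UNIV (\<lambda>x. bop (fst x) (snd x))"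
  by (auto simp: continuous_on_eq_continuous_within intro!: bounded_bilinear.continuous[OF assms] continuous_intros)

lemma measurable_bilinear:
  fixes f :: "_ \<Rightarrow> 'a::euclidean_space" and g :: "_ \<Rightarrow> 'b::euclidean_space"
  assumes "bounded_bilinear bop" "f \<in> borel_measurable M" "g \<in> borel_measurable M"
  shows "(\<lambda>x. (bop (f x) (g x) :: 'c::euclidean_space)) \<in> borel_measurable M"
  using borel_measurable_continuous_Pair[OF assms(2,3) continuous_on_UNIV_bilinear[OF assms(1)]] .

lemma set_borel_measurable_bilinear:
  fixes f :: "_ \<Rightarrow> 'a::euclidean_space" and g :: "_ \<Rightarrow> 'b::euclidean_space"
  assumes bb: "bounded_bilinear bop" and f: "set_borel_measurable M A f" and g: "set_borel_measurable M A g"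
  shows "set_borel_measurable M A (\<lambda>x. (bop (f x) (g x) :: 'c::euclidean_space))"
proof -
  have "(\<lambda>x. bop (indicator A x *\<^sub>R f x) (indicator A x *\<^sub>R g x)) \<in> borel_measurable M"
    using f g unfolding set_borel_measurable_def by (intro measurable_bilinear[OF bb])
  moreover have "bop (indicator A x *\<^sub>R f x) (indicator A x *\<^sub>R g x) = indicator A x *\<^sub>R bop (f x) (g x)" for x
    by (simp add: bounded_bilinear.scaleR_left[OF bb] bounded_bilinear.scaleR_right[OF bb] indicator_def)
  ultimately show ?thesis unfolding set_borel_measurable_def by simp
qed

lemma set_borel_measurable_continuous_Icc:
  fixes F :: "real \<Rightarrow> 'a::euclidean_space"
  assumes "continuous_on {a..b} F" "S \<subseteq> {a..b}" "S \<in> sets borel"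
  shows "set_borel_measurable lborel S F"
proof -
  have "(\<lambda>x. indicator S x *\<^sub>R (indicator {a..b} x *\<^sub>R F x)) \<in> borel_measurable lborel"
  proof -
    have m1: "(\<lambda>x. indicator {a..b} x *\<^sub>R F x) \<in> borel_measurable borel"
      by (rule borel_measurable_continuous_on_indicator[OF _ assms(1)]) auto
    have m2: "indicator S \<in> borel_measurable borel" using assms(3) by auto
    have "(\<lambda>x. indicator S x *\<^sub>R (indicator {a..b} x *\<^sub>R F x)) \<in> borel_measurable borel"
      by (rule borel_measurable_scaleR[OF m2 m1])
    then show ?thesis by simp
  qed
  moreover have "(\<lambda>x. indicator S x *\<^sub>R (indicator {a..b} x *\<^sub>R F x)) = (\<lambda>x. indicator S x *\<^sub>R F x)"
    using assms(2) by (auto simp: indicator_def fun_eq_iff)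
  ultimately show ?thesis unfolding set_borel_measurable_def by metis
qed

lemma continuous_bounded_Icc:
  fixes F :: "real \<Rightarrow> 'a::euclidean_space"
  assumes "continuous_on {a..b} F"
  obtains B where "B \<ge> 0" "\<And>x. x \<in> {a..b} \<Longrightarrow> norm (F x) \<le> B"
proof -
  have "compact (F ` {a..b})" using compact_continuous_image[OF assms] by simp
  then obtain B where "B > 0" "\<forall>y\<in>F ` {a..b}. norm y \<le> B"
    using compact_imp_bounded bounded_pos by metis
  then show ?thesis using that[of B] by auto
qed

lemma set_integrable_bilinear_cont:
  fixes F :: "real \<Rightarrow> 'a::euclidean_space" and u :: "real \<Rightarrow> 'b::euclidean_space"
  assumes bb: "bounded_bilinear bop" and F: "continuous_on {a..b} F"
    and u: "set_integrable lborel S u" and S: "S \<subseteq> {a..b}" "S \<in> sets borel"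
  shows "set_integrable lborel S (\<lambda>x. (bop (F x) (u x) :: 'c::euclidean_space))"
proof -
  obtain B where B: "B \<ge> 0" "\<And>x. x \<in> {a..b} \<Longrightarrow> norm (F x) \<le> B"
    using continuous_bounded_Icc[OF F] by blast
  obtain K where K: "\<And>x y. norm (bop x y) \<le> norm x * norm y * K" "K \<ge> 0"
    using bounded_bilinear.pos_bounded[OF bb] by (metis less_eq_real_def)
  have Fm: "set_borel_measurable lborel S F"
    by (rule set_borel_measurable_continuous_Icc[OF F S])
  have um: "set_borel_measurable lborel S u"
    using u by (rule set_integrable_imp_meas)
  have ui: "set_integrable lborel S (\<lambda>x. (B * K) *\<^sub>R u x)"
    unfolding set_integrable_def
    by (subst scaleR_left_commute, rule integrable_scaleR_right) (use u in \<open>simp add: set_integrable_def\<close>)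
  show "set_integrable lborel S (\<lambda>x. bop (F x) (u x))"
  proof (rule set_integrable_bound[OF ui set_borel_measurable_bilinear[OF bb Fm um]])
    show "AE x in lborel. x \<in> S \<longrightarrow> norm (bop (F x) (u x)) \<le> norm ((B * K) *\<^sub>R u x)"
    proof (intro AE_I2 impI)
      fix x assume "x \<in> S"
      then have "norm (F x) \<le> B" using S B by auto
      then have "norm (bop (F x) (u x)) \<le> B * norm (u x) * K"
        using K by (meson mult_right_mono norm_ge_zero order.trans)
      then show "norm (bop (F x) (u x)) \<le> norm ((B * K) *\<^sub>R u x)"
        using B K by (simp add: abs_mult ac_simps)
    qed
  qed
qed

lemma set_integrable_bilinear_cont':
  fixes F :: "real \<Rightarrow> 'a::euclidean_space" and u :: "real \<Rightarrow> 'b::euclidean_space"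
  assumes bb: "bounded_bilinear bop" and F: "continuous_on {a..b} F"
    and u: "set_integrable lborel S u" and S: "S \<subseteq> {a..b}" "S \<in> sets borel"
  shows "set_integrable lborel S (\<lambda>x. (bop (u x) (F x) :: 'c::euclidean_space))"
  using set_integrable_bilinear_cont[OF bounded_bilinear.flip[OF bb] F u S] by simp

lemma set_integrable_cont_Icc:
  fixes f :: "real \<Rightarrow> 'c::euclidean_space"
  assumes "continuous_on {a..b} f" "S \<subseteq> {a..b}" "S \<in> sets borel"
  shows "set_integrable lborel S f"
proof -
  have "set_integrable lborel {a..b} f"
    using borel_integrable_compact[OF compact_Icc assms(1)] unfolding set_integrable_def .
  then show ?thesis by (rule set_integrable_subset) (use assms(2,3) in auto)
qed

lemma lint_cont_Ioo:
  fixes f :: "real \<Rightarrow> 'c::euclidean_space"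
  assumes "continuous_on {a..b} f"
  shows "(LINT x:{a<..<b}|lborel. f x) = integral {a..b} f"
proof -
  have "set_integrable lborel {a<..<b} f"
    using assms by (rule set_integrable_cont_Icc) auto
  then have "(LINT x:{a<..<b}|lborel. f x) = integral {a<..<b} f"
    by (rule set_borel_integral_eq_integral)
  then show ?thesis by (simp add: integral_open_interval_real)
qed

lemma test_smooth: "test_fun S \<psi> \<Longrightarrow> smooth \<psi>"
  unfolding test_fun_def smooth_def by blast

lemma test_support_bounds:
  assumes tf: "test_fun {a<..<b} \<psi>" and pq: "a < p" "p \<le> q" "q < b"
  obtains \<alpha> \<beta> where "a < \<alpha>" "\<alpha> \<le> p" "q \<le> \<beta>" "\<beta> < b" "\<And>x. \<psi> x \<noteq> 0 \<Longrightarrow> \<alpha> \<le> x \<and> x \<le> \<beta>"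
proof -
  define K where "K = closure {x. \<psi> x \<noteq> 0} \<union> {p, q}"
  have cK: "compact K" using tf unfolding test_fun_def K_def by auto
  have Ksub: "K \<subseteq> {a<..<b}" using tf pq unfolding test_fun_def K_def by auto
  have ne: "K \<noteq> {}" by (auto simp: K_def)
  have bb: "bdd_below K" "bdd_above K"
    using compact_imp_bounded[OF cK] by (auto intro: bounded_imp_bdd_below bounded_imp_bdd_above)
  have inK: "Inf K \<in> K" "Sup K \<in> K"
    using closed_contains_Inf[OF ne bb(1)] closed_contains_Sup[OF ne bb(2)] compact_imp_closed[OF cK] by auto
  show ?thesis
  proof (rule that[of "Inf K" "Sup K"])
    show "a < Inf K" "Sup K < b" using inK Ksub by auto
    have "p \<in> K" "q \<in> K" by (simp_all add: K_def)
    then show "Inf K \<le> p" "q \<le> Sup K" using bb by (simp_all add: cInf_lower cSup_upper)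
    fix x assume "\<psi> x \<noteq> 0"
    then have "x \<in> closure {x. \<psi> x \<noteq> 0}" by (intro subsetD[OF closure_subset]) simp
    then have "x \<in> K" by (simp add: K_def)
    then show "Inf K \<le> x \<and> x \<le> Sup K" using bb by (simp add: cInf_lower cSup_upper)
  qed
qed

lemma antideriv_test:
  fixes ch :: "real \<Rightarrow> real"
  assumes sm: "smooth ch" and supp: "\<And>x. ch x \<noteq> 0 \<Longrightarrow> \<alpha> \<le> x \<and> x \<le> \<beta>"
    and a\<alpha>: "a < \<alpha>" and \<beta>b: "\<beta> < b" and ab: "a < b" and int0: "integral {a..b} ch = 0"
  shows "test_fun {a<..<b} (\<lambda>x. integral {a..x} ch)" "deriv (\<lambda>x. integral {a..x} ch) = ch"
proof -
  define \<Psi> where "\<Psi> x = integral {a..x} ch" for x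
  have cont: "continuous_on A ch" for A using smooth_continuous[OF sm] .
  have intg: "ch integrable_on {u..v}" for u v by (rule integrable_continuous_interval[OF cont])
  have z: "integral {u..v} ch = 0" if "\<And>t. u \<le> t \<Longrightarrow> t \<le> v \<Longrightarrow> ch t = 0" for u v
    by (rule integral_unique, rule has_integral_is_0) (use that in auto)
  have sz: "ch t = 0" if "t < \<alpha> \<or> \<beta> < t" for t
  proof (rule ccontr)
    assume "ch t \<noteq> 0"
    then have "\<alpha> \<le> t \<and> t \<le> \<beta>" by (rule supp)
    then show False using that by linarith
  qed
  have zl: "\<Psi> y = 0" if "y < \<alpha>" for y
    unfolding \<Psi>_def using that by (intro z sz) linarith
  have zr: "\<Psi> y = 0" if "y > \<beta>" for y
  proof (cases "y < a")
    case True
    then show ?thesis unfolding \<Psi>_def by (intro z) auto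
  next
    case False
    show ?thesis
    proof (cases "y \<le> b")
      case True
      have "integral {a..y} ch + integral {y..b} ch = integral {a..b} ch"
        using False True by (intro Henstock_Kurzweil_Integration.integral_combine intg) auto
      moreover have "integral {y..b} ch = 0" using that by (intro z sz) linarith
      ultimately show ?thesis using int0 by (simp add: \<Psi>_def)
    next
      case b: False
      have "integral {a..b} ch + integral {b..y} ch = integral {a..y} ch"
        using False b ab by (intro Henstock_Kurzweil_Integration.integral_combine intg) auto
      moreover have "integral {b..y} ch = 0" using \<beta>b by (intro z sz) linarith
      ultimately show ?thesis using int0 by (simp add: \<Psi>_def)
    qed
  qed
  have D: "(\<Psi> has_real_derivative ch x) (at x)" for x
  proof (cases "x < \<alpha>")
    case True
    show ?thesis
    proof (rule has_field_derivative_transform_within_open[where S="{..<\<alpha>}" and f="\<lambda>_. 0"])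
      show "((\<lambda>_. 0) has_real_derivative ch x) (at x)" using True sz[of x]
        by (simp add: DERIV_const)
    qed (use True zl in auto)
  next
    case False
    show ?thesis
    proof (cases "x > \<beta>")
      case True
      show ?thesis
      proof (rule has_field_derivative_transform_within_open[where S="{\<beta><..}" and f="\<lambda>_. 0"])
        show "((\<lambda>_. 0) has_real_derivative ch x) (at x)" using True sz[of x]
          by (simp add: DERIV_const)
      qed (use True zr in auto)
    next
      case x: False
      then have ax: "a < x" "x < b" using False a\<alpha> \<beta>b by auto
      have "(\<Psi> has_real_derivative ch x) (at x within {a..b})"
        unfolding \<Psi>_def using ax by (intro integral_has_real_derivative cont) auto
      then show ?thesis using at_within_Icc_at[OF ax] by simp
    qed
  qed
  have dd: "deriv \<Psi> = ch" using D DERIV_imp_deriv by blast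
  have "\<Psi> differentiable (at x)" for x
    unfolding real_differentiable_def by (rule exI[of _ "ch x"], rule D)
  then have "smooth \<Psi>"
    unfolding smooth_iff[of \<Psi>] dd using sm by blast
  then show "test_fun {a<..<b} (\<lambda>x. integral {a..x} ch)"
    unfolding \<Psi>_def[abs_def]
  proof (rule test_funI[of _ \<alpha> \<beta>])
    fix x assume "integral {a..x} ch \<noteq> 0"
    then show "\<alpha> \<le> x \<and> x \<le> \<beta>" using zl[of x] zr[of x] unfolding \<Psi>_def by linarith
  qed (use a\<alpha> \<beta>b in auto)
  show "deriv (\<lambda>x. integral {a..x} ch) = ch" using dd unfolding \<Psi>_def[abs_def] .
qed

lemma set_integrable_const_Ioo: "set_integrable lborel {a<..<b} (\<lambda>_. C :: 'c::euclidean_space)" for a b :: real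
  by (rule set_integrable_cont_Icc[of a b]) auto

lemma du_bois_reymond:
  fixes h :: "real \<Rightarrow> 'c::euclidean_space"
  assumes ab: "a < b" and hi: "set_integrable lborel {a<..<b} h"
    and orth: "\<And>\<psi>. test_fun {a<..<b} \<psi> \<Longrightarrow> (LINT x:{a<..<b}|lborel. deriv \<psi> x *\<^sub>R h x) = 0"
  shows "\<exists>C. AE x in lborel. x \<in> {a<..<b} \<longrightarrow> h x = C"
proof -
  define S where "S = {a<..<b}"
  define p where "p = a + (b - a) / 3"
  define q where "q = b - (b - a) / 3"
  have pq: "a < p" "p < q" "q < b" using ab by (auto simp: p_def q_def field_simps)
  define \<theta> where "\<theta> = bump p q"
  have \<theta>sm: "smooth \<theta>" unfolding \<theta>_def by (rule smooth_bump)
  have \<theta>supp: "\<theta> x \<noteq> 0 \<Longrightarrow> p \<le> x \<and> x \<le> q" for x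
    unfolding \<theta>_def using bump_zero[of p x q] by fastforce
  have \<theta>cont: "continuous_on A \<theta>" for A using smooth_continuous[OF \<theta>sm] .
  define I\<theta> where "I\<theta> = integral {a..b} \<theta>"
  have I\<theta>pos: "I\<theta> > 0"
  proof -
    have nn: "\<And>x. x \<in> {a..b} \<Longrightarrow> \<theta> x \<ge> 0" by (simp add: \<theta>_def bump_nonneg)
    have "I\<theta> \<ge> 0" unfolding I\<theta>_def
      by (rule integral_nonneg[OF integrable_continuous_interval[OF \<theta>cont]]) (use nn in auto)
    moreover have "I\<theta> \<noteq> 0"
    proof
      assume "I\<theta> = 0"
      then have "\<forall>x\<in>{a..b}. \<theta> x = 0" unfolding I\<theta>_def
        using integral_eq_0_iff[OF \<theta>cont ab nn] by blast
      moreover have "\<theta> ((p + q) / 2) > 0" unfolding \<theta>_def using pq by (simp add: bump_pos_iff)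
      moreover have "(p + q) / 2 \<in> {a..b}" using pq by auto
      ultimately show False by force
    qed
    ultimately show ?thesis by simp
  qed
  have intcf: "set_integrable lborel S (\<lambda>x. f x *\<^sub>R h x)" if "smooth f" for f
    unfolding S_def
    by (rule set_integrable_bilinear_cont[OF bounded_bilinear_scaleR smooth_continuous[OF that] hi, of a b]) auto
  define C where "C = (1 / I\<theta>) *\<^sub>R (LINT x:S|lborel. \<theta> x *\<^sub>R h x)"
  have key: "(LINT x:S|lborel. \<psi> x *\<^sub>R (h x - C)) = 0" if tf: "test_fun S \<psi>" for \<psi>
  proof -
    have \<psi>sm: "smooth \<psi>" using tf by (rule test_smooth)
    have \<psi>cont: "continuous_on A \<psi>" for A using smooth_continuous[OF \<psi>sm] .
    obtain \<alpha> \<beta> where \<alpha>\<beta>: "a < \<alpha>" "\<alpha> \<le> p" "q \<le> \<beta>" "\<beta> < b"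
        and \<psi>supp: "\<And>x. \<psi> x \<noteq> 0 \<Longrightarrow> \<alpha> \<le> x \<and> x \<le> \<beta>"
      using test_support_bounds[of a b \<psi> p q] tf pq unfolding S_def by auto
    define I\<psi> where "I\<psi> = integral {a..b} \<psi>"
    define k where "k = I\<psi> / I\<theta>"
    define ch where "ch x = \<psi> x - k * \<theta> x" for x
    have chsm: "smooth ch" unfolding ch_def[abs_def]
      by (intro smooth_diff smooth_cmult \<psi>sm \<theta>sm)
    have chsupp: "ch x \<noteq> 0 \<Longrightarrow> \<alpha> \<le> x \<and> x \<le> \<beta>" for x
    proof -
      assume "ch x \<noteq> 0"
      then have "\<psi> x \<noteq> 0 \<or> \<theta> x \<noteq> 0" by (auto simp: ch_def)
      then show ?thesis using \<psi>supp[of x] \<theta>supp[of x] \<alpha>\<beta> by auto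
    qed
    have chint: "integral {a..b} ch = 0"
    proof -
      have "integral {a..b} ch = I\<psi> - k * I\<theta>"
        unfolding ch_def I\<psi>_def I\<theta>_def
        by (subst integral_diff) (auto intro!: integrable_continuous_interval \<psi>cont \<theta>cont continuous_intros)
      then show ?thesis using I\<theta>pos by (simp add: k_def)
    qed
    have tfa: "test_fun {a<..<b} (\<lambda>x. integral {a..x} ch)" and da: "deriv (\<lambda>x. integral {a..x} ch) = ch"
      using antideriv_test[OF chsm chsupp \<alpha>\<beta>(1) \<alpha>\<beta>(4) ab chint] by blast+
    have "(LINT x:S|lborel. ch x *\<^sub>R h x) = 0"
      using orth[OF tfa] unfolding da S_def .
    moreover have "(LINT x:S|lborel. ch x *\<^sub>R h x) = (LINT x:S|lborel. \<psi> x *\<^sub>R h x) - k *\<^sub>R (LINT x:S|lborel. \<theta> x *\<^sub>R h x)"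
    proof -
      have "(LINT x:S|lborel. ch x *\<^sub>R h x) = (LINT x:S|lborel. \<psi> x *\<^sub>R h x - k *\<^sub>R (\<theta> x *\<^sub>R h x))"
        by (simp add: ch_def algebra_simps)
      also have "\<dots> = (LINT x:S|lborel. \<psi> x *\<^sub>R h x) - (LINT x:S|lborel. k *\<^sub>R (\<theta> x *\<^sub>R h x))"
      proof -
        have i2: "set_integrable lborel S (\<lambda>x. k *\<^sub>R (\<theta> x *\<^sub>R h x))"
          by (rule set_integrable_scaleR_right) (rule intcf[OF \<theta>sm])
        show ?thesis by (rule set_integral_diff(2)[OF intcf[OF \<psi>sm] i2])
      qed
      finally show ?thesis by (simp only: set_integral_scaleR_right)
    qed
    moreover have "(LINT x:S|lborel. \<psi> x *\<^sub>R (h x - C)) = (LINT x:S|lborel. \<psi> x *\<^sub>R h x) - I\<psi> *\<^sub>R C"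
    proof -
      have i1: "set_integrable lborel S \<psi>" unfolding S_def by (rule set_integrable_cont_Icc[of a b, OF \<psi>cont]) auto
      have "(LINT x:S|lborel. \<psi> x *\<^sub>R (h x - C)) = (LINT x:S|lborel. \<psi> x *\<^sub>R h x - \<psi> x *\<^sub>R C)"
        by (simp add: algebra_simps)
      also have "\<dots> = (LINT x:S|lborel. \<psi> x *\<^sub>R h x) - (LINT x:S|lborel. \<psi> x *\<^sub>R C)"
        using intcf[OF \<psi>sm] set_integrable_bounded_linear[OF bounded_linear_scaleR_left i1, of C]
        by (intro set_integral_diff) auto
      also have "(LINT x:S|lborel. \<psi> x *\<^sub>R C) = (LINT x:S|lborel. \<psi> x) *\<^sub>R C"
        by (rule set_integral_bounded_linear[OF bounded_linear_scaleR_left i1])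
      also have "(LINT x:S|lborel. \<psi> x) = I\<psi>"
        unfolding S_def I\<psi>_def by (rule lint_cont_Ioo[OF \<psi>cont])
      finally show ?thesis .
    qed
    moreover have "I\<psi> *\<^sub>R C = k *\<^sub>R (LINT x:S|lborel. \<theta> x *\<^sub>R h x)"
      unfolding C_def k_def by (simp add: divide_inverse)
    ultimately show ?thesis by simp
  qed
  have "AE x in lborel. x \<in> {a<..<b} \<longrightarrow> h x - C = 0"
  proof (rule fundamental_lemma[OF ab])
    show "set_integrable lborel {a<..<b} (\<lambda>x. h x - C)"
      using hi set_integrable_const_Ioo by (intro set_integral_diff) auto
    show "(LINT x:{a<..<b}|lborel. \<psi> x *\<^sub>R (h x - C)) = 0" if "test_fun {a<..<b} \<psi>" for \<psi>
      using key that unfolding S_def by blast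
  qed
  then show ?thesis by auto
qed

definition indef :: "real \<Rightarrow> (real \<Rightarrow> 'c::euclidean_space) \<Rightarrow> real \<Rightarrow> 'c" where
  "indef a f x = (LINT t:{a..x}|lborel. f t)"

lemma indef_eq_integral:
  fixes u :: "real \<Rightarrow> 'c::euclidean_space"
  assumes "set_integrable lborel {a..b} u" "t \<in> {a..b}"
  shows "indef a u t = integral {a..t} u"
proof -
  have "set_integrable lborel {a..t} u"
    by (rule set_integrable_subset[OF assms(1)]) (use assms(2) in auto)
  then show ?thesis unfolding indef_def by (rule set_borel_integral_eq_integral)
qed

lemma indef_cont:
  fixes u :: "real \<Rightarrow> 'c::euclidean_space"
  assumes "set_integrable lborel {a..b} u"
  shows "continuous_on {a..b} (indef a u)"
proof -
  have "u integrable_on {a..b}" using set_borel_integral_eq_integral(1)[OF assms] .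
  then have "continuous_on {a..b} (\<lambda>t. integral {a..t} u)" by (rule indefinite_integral_continuous_1)
  then show ?thesis by (rule continuous_on_eq) (use indef_eq_integral[OF assms] in auto)
qed

lemma integrable_prod_lborel:
  fixes f g :: "real \<Rightarrow> real"
  assumes f: "integrable lborel f" and g: "integrable lborel g"
  shows "integrable (lborel \<Otimes>\<^sub>M lborel) (\<lambda>z. f (fst z) * g (snd z))"
proof (rule integrableI_bounded)
  have [measurable]: "f \<in> borel_measurable lborel" "g \<in> borel_measurable lborel" using f g by auto
  show "(\<lambda>z. f (fst z) * g (snd z)) \<in> borel_measurable (lborel \<Otimes>\<^sub>M lborel)" by measurable
  have "(\<integral>\<^sup>+ z. ennreal (norm (f (fst z) * g (snd z))) \<partial>(lborel \<Otimes>\<^sub>M lborel))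
      = (\<integral>\<^sup>+ t. \<integral>\<^sup>+ s. ennreal (norm (f t)) * ennreal (norm (g s)) \<partial>lborel \<partial>lborel)"
    by (subst lborel.nn_integral_fst[symmetric]) (auto simp: abs_mult ennreal_mult)
  also have "\<dots> = (\<integral>\<^sup>+ t. ennreal (norm (f t)) * (\<integral>\<^sup>+ s. ennreal (norm (g s)) \<partial>lborel) \<partial>lborel)"
    by (subst nn_integral_cmult) auto
  also have "\<dots> = (\<integral>\<^sup>+ t. ennreal (norm (f t)) \<partial>lborel) * (\<integral>\<^sup>+ s. ennreal (norm (g s)) \<partial>lborel)"
    by (subst nn_integral_multc) auto
  also have "\<dots> < \<infinity>"
    using f g unfolding integrable_iff_bounded by (simp add: ennreal_mult_less_top)
  finally show "(\<integral>\<^sup>+ z. ennreal (norm (f (fst z) * g (snd z))) \<partial>(lborel \<Otimes>\<^sub>M lborel)) < \<infinity>" .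
qed

lemma product_rule_core:
  fixes u :: "real \<Rightarrow> 'a::euclidean_space" and w :: "real \<Rightarrow> 'b::euclidean_space"
    and bop :: "'a \<Rightarrow> 'b \<Rightarrow> 'c::euclidean_space"
  assumes bb: "bounded_bilinear bop"
    and um[measurable]: "u \<in> borel_measurable lborel" and wm[measurable]: "w \<in> borel_measurable lborel"
    and ui: "set_integrable lborel {a..x} u" and wi: "set_integrable lborel {a..x} w"
  shows "bop (indef a u x) (indef a w x) =
    (LINT t:{a..x}|lborel. bop (u t) (indef a w t)) + (LINT t:{a..x}|lborel. bop (indef a u t) (w t))"
proof -
  interpret B: bounded_bilinear bop by (rule bb)
  define K where "K t s = bop (u t) (w s)" for t s
  define R where "R = {z::real\<times>real. a \<le> fst z \<and> fst z \<le> snd z \<and> snd z \<le> x}"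
  define f2 where "f2 t s = indicator R (t, s) *\<^sub>R K t s" for t s
  obtain B0 where B0: "\<And>p q. norm (bop p q) \<le> norm p * norm q * B0" "B0 > 0"
    using B.pos_bounded by blast
  have Rm: "R \<in> sets (lborel \<Otimes>\<^sub>M lborel)"
  proof -
    have "{z \<in> space (lborel \<Otimes>\<^sub>M lborel). a \<le> fst z \<and> fst z \<le> snd z \<and> snd z \<le> x} \<in> sets (lborel \<Otimes>\<^sub>M lborel)"
      by measurable
    moreover have "{z \<in> space (lborel \<Otimes>\<^sub>M lborel). a \<le> fst z \<and> fst z \<le> snd z \<and> snd z \<le> x} = R"
      by (auto simp: R_def space_pair_measure)
    ultimately show ?thesis by simp
  qed
  have Km: "(\<lambda>z. K (fst z) (snd z)) \<in> borel_measurable (lborel \<Otimes>\<^sub>M lborel)"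
    unfolding K_def by (rule measurable_bilinear[OF bb]) measurable
  have f2m: "case_prod f2 \<in> borel_measurable (lborel \<Otimes>\<^sub>M lborel)"
  proof -
    have "(\<lambda>z. indicator R z *\<^sub>R K (fst z) (snd z)) \<in> borel_measurable (lborel \<Otimes>\<^sub>M lborel)"
      using Rm Km by measurable
    moreover have "case_prod f2 = (\<lambda>z. indicator R z *\<^sub>R K (fst z) (snd z))"
      by (auto simp: f2_def fun_eq_iff)
    ultimately show ?thesis by simp
  qed
  define ua where "ua t = indicator {a..x} t *\<^sub>R u t" for t
  define wa where "wa t = indicator {a..x} t *\<^sub>R w t" for t
  have uai: "integrable lborel ua" using ui unfolding set_integrable_def ua_def .
  have wai: "integrable lborel wa" using wi unfolding set_integrable_def wa_def .
  have f2i: "integrable (lborel \<Otimes>\<^sub>M lborel) (case_prod f2)"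
  proof (rule Bochner_Integration.integrable_bound)
    show "integrable (lborel \<Otimes>\<^sub>M lborel) (\<lambda>z. B0 * (norm (ua (fst z)) * norm (wa (snd z))))"
      by (intro integrable_mult_right integrable_prod_lborel integrable_norm uai wai)
    show "case_prod f2 \<in> borel_measurable (lborel \<Otimes>\<^sub>M lborel)" by (rule f2m)
    show "AE z in lborel \<Otimes>\<^sub>M lborel. norm (case_prod f2 z) \<le> norm (B0 * (norm (ua (fst z)) * norm (wa (snd z))))"
    proof (intro AE_I2)
      fix z :: "real \<times> real"
      obtain t s where z: "z = (t, s)" by (cases z)
      show "norm (case_prod f2 z) \<le> norm (B0 * (norm (ua (fst z)) * norm (wa (snd z))))"
      proof (cases "z \<in> R")
        case True
        then have "t \<in> {a..x}" "s \<in> {a..x}" using z by (auto simp: R_def)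
        then have "norm (case_prod f2 z) = norm (bop (u t) (w s))"
          "norm (ua (fst z)) = norm (u t)" "norm (wa (snd z)) = norm (w s)"
          using True z by (auto simp: f2_def K_def ua_def wa_def)
        then show ?thesis using B0(1)[of "u t" "w s"] B0(2) by (simp add: ac_simps abs_mult)
      next
        case False
        then show ?thesis using z B0(2) by (simp add: f2_def)
      qed
    qed
  qed
  have sside: "(LBINT t. f2 t s) = indicator {a..x} s *\<^sub>R bop (indef a u s) (w s)" for s
  proof (cases "s \<in> {a..x}")
    case True
    have "f2 t s = indicator {a..s} t *\<^sub>R bop (u t) (w s)" for t
      using True by (auto simp: f2_def K_def R_def indicator_def)
    then have "(LBINT t. f2 t s) = (LINT t:{a..s}|lborel. bop (u t) (w s))"
      unfolding set_lebesgue_integral_def by simp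
    also have "\<dots> = bop (indef a u s) (w s)"
      unfolding indef_def
      by (rule set_integral_bounded_linear[OF B.bounded_linear_left set_integrable_subset[OF ui]])
        (use True in auto)
    finally show ?thesis using True by simp
  next
    case False
    then have "f2 t s = 0" for t by (auto simp: f2_def R_def)
    then show ?thesis using False by simp
  qed
  have tside: "(LBINT s. f2 t s) = indicator {a..x} t *\<^sub>R (LINT s:{t..x}|lborel. K t s)" for t
  proof (cases "t \<in> {a..x}")
    case True
    have "f2 t s = indicator {t..x} s *\<^sub>R K t s" for s
      using True by (auto simp: f2_def R_def indicator_def)
    then show ?thesis using True unfolding set_lebesgue_integral_def by simp
  next
    case False
    then have "f2 t s = 0" for s by (auto simp: f2_def R_def)
    then show ?thesis using False by simp
  qed
  have fub: "(LBINT s. (LBINT t. f2 t s)) = (LBINT t. (LBINT s. f2 t s))"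
    by (rule lborel_pair.Fubini_integral[OF f2i])
  have I2: "(LINT t:{a..x}|lborel. bop (indef a u t) (w t)) = (LBINT t. indicator {a..x} t *\<^sub>R (LINT s:{t..x}|lborel. K t s))"
    using fub unfolding sside tside set_lebesgue_integral_def .
  have int2: "integrable lborel (\<lambda>t. indicator {a..x} t *\<^sub>R (LINT s:{t..x}|lborel. K t s))"
    using lborel_pair.integrable_fst'[OF f2i] by (simp add: tside)
  have int1: "integrable lborel (\<lambda>t. indicator {a..x} t *\<^sub>R bop (u t) (indef a w t))"
    using set_integrable_bilinear_cont'[OF bb indef_cont[OF wi] ui] unfolding set_integrable_def by auto
  have pt: "indicator {a..x} t *\<^sub>R bop (u t) (indef a w t) + indicator {a..x} t *\<^sub>R (LINT s:{t..x}|lborel. K t s)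
      = indicator {a..x} t *\<^sub>R bop (u t) (indef a w x)" for t
  proof (cases "t \<in> {a..x}")
    case True
    have wt: "set_integrable lborel {a..t} w" "set_integrable lborel {t..x} w"
      using True by (auto intro: set_integrable_subset[OF wi])
    have Ki: "set_integrable lborel A (K t)" if "set_integrable lborel A w" for A
      unfolding K_def by (rule set_integrable_bounded_linear[OF B.bounded_linear_right that])
    have "bop (u t) (indef a w t) = (LINT s:{a..t}|lborel. K t s)"
      unfolding indef_def K_def by (rule set_integral_bounded_linear[OF B.bounded_linear_right wt(1), symmetric])
    moreover have "(LINT s:{a..t}|lborel. K t s) + (LINT s:{t..x}|lborel. K t s) = (LINT s:{a..t} \<union> {t..x}|lborel. K t s)"
      by (rule set_integral_Un_AE[symmetric]) (auto intro: Ki wt AE_mp[OF AE_lborel_singleton[of t]])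
    moreover have "{a..t} \<union> {t..x} = {a..x}" using True by auto
    moreover have "(LINT s:{a..x}|lborel. K t s) = bop (u t) (indef a w x)"
      unfolding indef_def K_def by (rule set_integral_bounded_linear[OF B.bounded_linear_right wi])
    ultimately show ?thesis using True by simp
  next
    case False
    then show ?thesis by simp
  qed
  have "(LINT t:{a..x}|lborel. bop (u t) (indef a w t)) + (LINT t:{a..x}|lborel. bop (indef a u t) (w t))
      = (LBINT t. indicator {a..x} t *\<^sub>R bop (u t) (indef a w t) + indicator {a..x} t *\<^sub>R (LINT s:{t..x}|lborel. K t s))"
  proof -
    have e1: "(LINT t:{a..x}|lborel. bop (u t) (indef a w t)) = (LBINT t. indicator {a..x} t *\<^sub>R bop (u t) (indef a w t))"
      by (simp add: set_lebesgue_integral_def)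
    show ?thesis unfolding I2 e1 by (rule Bochner_Integration.integral_add[symmetric, OF int1 int2])
  qed
  also have "\<dots> = (LINT t:{a..x}|lborel. bop (u t) (indef a w x))"
    unfolding pt by (simp add: set_lebesgue_integral_def)
  also have "\<dots> = bop (indef a u x) (indef a w x)"
    unfolding indef_def by (rule set_integral_bounded_linear[OF B.bounded_linear_left ui])
  finally show ?thesis by simp
qed

lemma indef_cong:
  assumes "\<And>s. s \<in> {a..x} \<Longrightarrow> f s = g s" "t \<in> {a..x}"
  shows "indef a f t = indef a g t"
  unfolding indef_def using assms by (intro set_lebesgue_integral_cong) auto

lemma product_rule_core2:
  fixes u :: "real \<Rightarrow> 'a::euclidean_space" and w :: "real \<Rightarrow> 'b::euclidean_space"
    and bop :: "'a \<Rightarrow> 'b \<Rightarrow> 'c::euclidean_space"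
  assumes bb: "bounded_bilinear bop"
    and ui: "set_integrable lborel {a..x} u" and wi: "set_integrable lborel {a..x} w"
  shows "bop (indef a u x) (indef a w x) =
    (LINT t:{a..x}|lborel. bop (u t) (indef a w t)) + (LINT t:{a..x}|lborel. bop (indef a u t) (w t))"
proof (cases "a \<le> x")
  case False
  then show ?thesis by (simp add: indef_def set_lebesgue_integral_def bounded_bilinear.zero_left[OF bb])
next
  case ax: True
  define ua where "ua t = indicator {a..x} t *\<^sub>R u t" for t
  define wa where "wa t = indicator {a..x} t *\<^sub>R w t" for t
  have uam: "ua \<in> borel_measurable lborel" using ui unfolding set_integrable_def ua_def by auto
  have wam: "wa \<in> borel_measurable lborel" using wi unfolding set_integrable_def wa_def by auto
  have uai: "set_integrable lborel {a..x} ua" using ui by (subst set_integrable_cong[where f'=u]) (auto simp: ua_def)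
  have wai: "set_integrable lborel {a..x} wa" using wi by (subst set_integrable_cong[where f'=w]) (auto simp: wa_def)
  have iu: "indef a ua t = indef a u t" if "t \<in> {a..x}" for t
    using that by (intro indef_cong[of a x]) (auto simp: ua_def)
  have iw: "indef a wa t = indef a w t" if "t \<in> {a..x}" for t
    using that by (intro indef_cong[of a x]) (auto simp: wa_def)
  have "bop (indef a ua x) (indef a wa x) =
    (LINT t:{a..x}|lborel. bop (ua t) (indef a wa t)) + (LINT t:{a..x}|lborel. bop (indef a ua t) (wa t))"
    by (rule product_rule_core[OF bb uam wam uai wai])
  moreover have "(LINT t:{a..x}|lborel. bop (ua t) (indef a wa t)) = (LINT t:{a..x}|lborel. bop (u t) (indef a w t))"
    by (intro set_lebesgue_integral_cong) (auto simp: iw ua_def)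
  moreover have "(LINT t:{a..x}|lborel. bop (indef a ua t) (wa t)) = (LINT t:{a..x}|lborel. bop (indef a u t) (w t))"
    by (intro set_lebesgue_integral_cong) (auto simp: iu wa_def)
  ultimately show ?thesis using iu[of x] iw[of x] ax by simp
qed

lemma product_rule:
  fixes u :: "real \<Rightarrow> 'a::euclidean_space" and w :: "real \<Rightarrow> 'b::euclidean_space"
    and bop :: "'a \<Rightarrow> 'b \<Rightarrow> 'c::euclidean_space"
  assumes bb: "bounded_bilinear bop" and ax: "a \<le> x"
    and ui: "set_integrable lborel {a..x} u" and wi: "set_integrable lborel {a..x} w"
    and U: "\<And>t. t \<in> {a..x} \<Longrightarrow> U t = U0 + indef a u t"
    and W: "\<And>t. t \<in> {a..x} \<Longrightarrow> W t = W0 + indef a w t"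
  shows "bop (U x) (W x) = bop U0 W0 + (LINT t:{a..x}|lborel. bop (u t) (W t) + bop (U t) (w t))"
proof -
  interpret B: bounded_bilinear bop by (rule bb)
  define A where "A = indef a u"
  define C where "C = indef a w"
  have Ac: "continuous_on {a..x} A" unfolding A_def by (rule indef_cont[OF ui])
  have Cc: "continuous_on {a..x} C" unfolding C_def by (rule indef_cont[OF wi])
  have i1: "set_integrable lborel {a..x} (\<lambda>t. bop (u t) W0)"
    by (rule set_integrable_bounded_linear[OF B.bounded_linear_left ui])
  have i2: "set_integrable lborel {a..x} (\<lambda>t. bop (u t) (C t))"
    by (rule set_integrable_bilinear_cont'[OF bb Cc ui]) auto
  have i3: "set_integrable lborel {a..x} (\<lambda>t. bop U0 (w t))"
    by (rule set_integrable_bounded_linear[OF B.bounded_linear_right wi])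
  have i4: "set_integrable lborel {a..x} (\<lambda>t. bop (A t) (w t))"
    by (rule set_integrable_bilinear_cont[OF bb Ac wi]) auto
  have "(LINT t:{a..x}|lborel. bop (u t) (W t) + bop (U t) (w t))
      = (LINT t:{a..x}|lborel. bop (u t) W0 + bop (u t) (C t) + bop U0 (w t) + bop (A t) (w t))"
    by (intro set_lebesgue_integral_cong) (auto simp: U W A_def C_def B.add_left B.add_right)
  also have "\<dots> = (LINT t:{a..x}|lborel. bop (u t) W0) + (LINT t:{a..x}|lborel. bop (u t) (C t))
      + (LINT t:{a..x}|lborel. bop U0 (w t)) + (LINT t:{a..x}|lborel. bop (A t) (w t))"
    using i1 i2 i3 i4 by (simp add: set_integral_add)
  also have "(LINT t:{a..x}|lborel. bop (u t) W0) = bop (A x) W0"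
    unfolding A_def indef_def by (rule set_integral_bounded_linear[OF B.bounded_linear_left ui])
  also have "(LINT t:{a..x}|lborel. bop U0 (w t)) = bop U0 (C x)"
    unfolding C_def indef_def by (rule set_integral_bounded_linear[OF B.bounded_linear_right wi])
  finally have e: "(LINT t:{a..x}|lborel. bop (u t) (W t) + bop (U t) (w t)) =
      bop (A x) W0 + (LINT t:{a..x}|lborel. bop (u t) (C t)) + bop U0 (C x) + (LINT t:{a..x}|lborel. bop (A t) (w t))" .
  have core: "bop (A x) (C x) = (LINT t:{a..x}|lborel. bop (u t) (C t)) + (LINT t:{a..x}|lborel. bop (A t) (w t))"
    unfolding A_def C_def by (rule product_rule_core2[OF bb ui wi])
  have "bop (U x) (W x) = bop U0 W0 + bop U0 (C x) + bop (A x) W0 + bop (A x) (C x)"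
    using U[of x] W[of x] ax by (simp add: A_def C_def B.add_left B.add_right)
  then show ?thesis unfolding e core by (simp add: algebra_simps)
qed

definition wd :: "real set \<Rightarrow> (real \<Rightarrow> 'c::euclidean_space) \<Rightarrow> (real \<Rightarrow> 'c) \<Rightarrow> bool" where
  "wd S f g \<longleftrightarrow> set_integrable lborel S f \<and> set_integrable lborel S g \<and>
     (\<forall>\<psi>. test_fun S \<psi> \<longrightarrow>
        (LINT x:S|lborel. deriv \<psi> x *\<^sub>R f x) = - (LINT x:S|lborel. \<psi> x *\<^sub>R g x))"

lemma weak_deriv_wd: "weak_deriv S f g = wd S f g"
  unfolding weak_deriv_def wd_def ..

lemma ind_Icc_Ioo: "x \<notin> {a, b} \<Longrightarrow> indicator {a..b} x = (indicator {a<..<b} x :: real)"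
  for a b x :: real by (auto simp: indicator_def)

lemma set_integrable_Icc_Ioo:
  fixes f :: "real \<Rightarrow> 'c::euclidean_space"
  shows "set_integrable lborel {a..b} f \<longleftrightarrow> set_integrable lborel {a<..<b} f"
  unfolding set_integrable_def
  by (rule integrable_discrete_difference[where X="{a,b}"]) (auto simp: ind_Icc_Ioo)

lemma set_integral_Icc_Ioo:
  fixes f :: "real \<Rightarrow> 'c::euclidean_space"
  shows "(LINT x:{a..b}|lborel. f x) = (LINT x:{a<..<b}|lborel. f x)"
  unfolding set_lebesgue_integral_def
  by (rule integral_discrete_difference[where X="{a,b}"]) (auto simp: ind_Icc_Ioo)

lemma set_lint_cong_AE:
  fixes f g :: "_ \<Rightarrow> 'c::euclidean_space"
  assumes "set_borel_measurable M A f" "set_borel_measurable M A g" "AE x in M. x \<in> A \<longrightarrow> f x = g x"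
  shows "(LINT x:A|M. f x) = (LINT x:A|M. g x)"
  unfolding set_lebesgue_integral_def
  using assms(1,2) unfolding set_borel_measurable_def
  by (rule integral_cong_AE) (use assms(3) in \<open>eventually_elim, auto simp: indicator_def\<close>)

lemma test_endpoints:
  assumes "test_fun {a<..<b} \<psi>"
  shows "\<psi> a = 0" "\<psi> b = 0"
proof -
  have "closure {x. \<psi> x \<noteq> 0} \<subseteq> {a<..<b}" using assms unfolding test_fun_def by simp
  then have "{x. \<psi> x \<noteq> 0} \<subseteq> {a<..<b}" using closure_subset[of "{x. \<psi> x \<noteq> 0}"] by (rule subset_trans[rotated])
  then show "\<psi> a = 0" "\<psi> b = 0" by auto
qed

lemma test_indef:
  assumes tf: "test_fun {a<..<b} \<psi>" and ab: "a < b" and t: "t \<in> {a..b}"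
  shows "\<psi> t = 0 + indef a (deriv \<psi>) t"
proof -
  have sm: "smooth \<psi>" using tf by (rule test_smooth)
  have dsm: "smooth (deriv \<psi>)" using sm by (rule smooth_deriv)
  have dc: "continuous_on A (deriv \<psi>)" for A using smooth_continuous[OF dsm] .
  have "(deriv \<psi> has_integral (\<psi> t - \<psi> a)) {a..t}"
  proof (rule fundamental_theorem_of_calculus)
    show "a \<le> t" using t by simp
    fix x show "(\<psi> has_vector_derivative deriv \<psi> x) (at x within {a..t})"
    proof -
      have "(\<psi> has_real_derivative deriv \<psi> x) (at x within {a..t})"
        using smooth_DERIV[OF sm, of x] by (rule has_field_derivative_at_within)
      then show ?thesis by (simp add: has_real_derivative_iff_has_vector_derivative)
    qed
  qed
  then have "integral {a..t} (deriv \<psi>) = \<psi> t" using test_endpoints[OF tf] by (simp add: integral_unique)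
  moreover have "indef a (deriv \<psi>) t = integral {a..t} (deriv \<psi>)"
    by (rule indef_eq_integral[OF set_integrable_cont_Icc[OF dc] t]) auto
  ultimately show ?thesis by simp
qed

lemma ac_wd:
  fixes u :: "real \<Rightarrow> 'c::euclidean_space"
  assumes ab: "a < b" and ui: "set_integrable lborel {a<..<b} u"
    and U: "\<And>t. t \<in> {a..b} \<Longrightarrow> U t = U0 + indef a u t"
  shows "wd {a<..<b} U u"
proof -
  have uI: "set_integrable lborel {a..b} u" using ui set_integrable_Icc_Ioo by blast
  have Uc: "continuous_on {a..b} U"
  proof -
    have "continuous_on {a..b} (\<lambda>t. U0 + indef a u t)"
      by (intro continuous_intros indef_cont[OF uI])
    then show ?thesis by (rule continuous_on_eq) (use U in auto)
  qed
  have UI: "set_integrable lborel {a<..<b} U" by (rule set_integrable_cont_Icc[OF Uc]) auto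
  have "(LINT x:{a<..<b}|lborel. deriv \<psi> x *\<^sub>R U x) = - (LINT x:{a<..<b}|lborel. \<psi> x *\<^sub>R u x)"
    if tf: "test_fun {a<..<b} \<psi>" for \<psi>
  proof -
    have sm: "smooth \<psi>" using tf by (rule test_smooth)
    have dsm: "smooth (deriv \<psi>)" using sm by (rule smooth_deriv)
    have dc: "continuous_on A (deriv \<psi>)" for A using smooth_continuous[OF dsm] .
    have pc: "continuous_on A \<psi>" for A using smooth_continuous[OF sm] .
    have dI: "set_integrable lborel {a..b} (deriv \<psi>)" by (rule set_integrable_cont_Icc[OF dc]) auto
    have "\<psi> b *\<^sub>R U b = 0 *\<^sub>R U0 + (LINT t:{a..b}|lborel. deriv \<psi> t *\<^sub>R U t + \<psi> t *\<^sub>R u t)"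
      by (rule product_rule[OF bounded_bilinear_scaleR _ dI uI test_indef[OF tf ab] U]) (use ab in auto)
    then have "(LINT t:{a..b}|lborel. deriv \<psi> t *\<^sub>R U t + \<psi> t *\<^sub>R u t) = 0"
      using test_endpoints[OF tf] by simp
    moreover have "(LINT t:{a..b}|lborel. deriv \<psi> t *\<^sub>R U t + \<psi> t *\<^sub>R u t)
        = (LINT t:{a..b}|lborel. deriv \<psi> t *\<^sub>R U t) + (LINT t:{a..b}|lborel. \<psi> t *\<^sub>R u t)"
    proof (rule set_integral_add(2))
      show "set_integrable lborel {a..b} (\<lambda>t. deriv \<psi> t *\<^sub>R U t)"
        by (rule set_integrable_cont_Icc[of a b]) (auto intro!: continuous_intros dc Uc)
      show "set_integrable lborel {a..b} (\<lambda>t. \<psi> t *\<^sub>R u t)"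
        by (rule set_integrable_bilinear_cont[OF bounded_bilinear_scaleR pc uI]) auto
    qed
    ultimately show ?thesis by (simp add: set_integral_Icc_Ioo eq_neg_iff_add_eq_0)
  qed
  then show ?thesis unfolding wd_def using UI ui by blast
qed

lemma smb_add:
  fixes f g :: "_ \<Rightarrow> 'c::euclidean_space"
  assumes "set_borel_measurable M A f" "set_borel_measurable M A g"
  shows "set_borel_measurable M A (\<lambda>x. f x + g x)"
  using borel_measurable_add[OF assms[unfolded set_borel_measurable_def]]
  unfolding set_borel_measurable_def by (simp add: scaleR_add_right)

lemma set_integrable_cong_AE:
  fixes f g :: "_ \<Rightarrow> 'c::euclidean_space"
  assumes "set_borel_measurable M A f" "set_borel_measurable M A g" "AE x in M. x \<in> A \<longrightarrow> f x = g x"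
  shows "set_integrable M A f \<longleftrightarrow> set_integrable M A g"
  unfolding set_integrable_def
  using assms(1,2) unfolding set_borel_measurable_def
  by (rule integrable_cong_AE) (use assms(3) in \<open>eventually_elim, auto simp: indicator_def\<close>)

lemma test_deriv_cont: "test_fun S \<psi> \<Longrightarrow> continuous_on A (deriv \<psi>)"
  using smooth_continuous[OF smooth_deriv[OF test_smooth]] by blast

lemma test_cont: "test_fun S \<psi> \<Longrightarrow> continuous_on A \<psi>"
  using smooth_continuous[OF test_smooth] by blast

lemma wd_unique:
  fixes f1 f2 g1 g2 :: "real \<Rightarrow> 'c::euclidean_space"
  assumes ab: "a < b" and w1: "wd {a<..<b} f1 g1" and w2: "wd {a<..<b} f2 g2"
    and ae: "AE x in lborel. x \<in> {a<..<b} \<longrightarrow> f1 x = f2 x"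
  shows "AE x in lborel. x \<in> {a<..<b} \<longrightarrow> g1 x = g2 x"
proof -
  have i: "set_integrable lborel {a<..<b} f1" "set_integrable lborel {a<..<b} g1"
      "set_integrable lborel {a<..<b} f2" "set_integrable lborel {a<..<b} g2"
    using w1 w2 unfolding wd_def by auto
  have "AE x in lborel. x \<in> {a<..<b} \<longrightarrow> g1 x - g2 x = 0"
  proof (rule fundamental_lemma[OF ab])
    show "set_integrable lborel {a<..<b} (\<lambda>x. g1 x - g2 x)" using i by auto
    fix \<psi> assume tf: "test_fun {a<..<b} \<psi>"
    have pi: "set_integrable lborel {a<..<b} (\<lambda>x. \<psi> x *\<^sub>R g x)" if "set_integrable lborel {a<..<b} g" for g :: "real \<Rightarrow> 'c"
      by (rule set_integrable_bilinear_cont[OF bounded_bilinear_scaleR test_cont[OF tf] that, of a b]) auto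
    have di: "set_integrable lborel {a<..<b} (\<lambda>x. deriv \<psi> x *\<^sub>R g x)" if "set_integrable lborel {a<..<b} g" for g :: "real \<Rightarrow> 'c"
      by (rule set_integrable_bilinear_cont[OF bounded_bilinear_scaleR test_deriv_cont[OF tf] that, of a b]) auto
    have "(LINT x:{a<..<b}|lborel. deriv \<psi> x *\<^sub>R f1 x) = (LINT x:{a<..<b}|lborel. deriv \<psi> x *\<^sub>R f2 x)"
      using ae by (intro set_lint_cong_AE set_integrable_imp_meas di i) (auto elim!: AE_mp)
    then have "(LINT x:{a<..<b}|lborel. \<psi> x *\<^sub>R g1 x) = (LINT x:{a<..<b}|lborel. \<psi> x *\<^sub>R g2 x)"
      using w1 w2 tf unfolding wd_def by auto
    moreover have "(LINT x:{a<..<b}|lborel. \<psi> x *\<^sub>R (g1 x - g2 x)) = (LINT x:{a<..<b}|lborel. \<psi> x *\<^sub>R g1 x) - (LINT x:{a<..<b}|lborel. \<psi> x *\<^sub>R g2 x)"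
      unfolding scaleR_right_diff_distrib by (rule set_integral_diff(2)[OF pi pi]) (use i in auto)
    ultimately show "(LINT x:{a<..<b}|lborel. \<psi> x *\<^sub>R (g1 x - g2 x)) = 0" by simp
  qed
  then show ?thesis by (auto elim!: AE_mp)
qed

lemma wd_rep:
  fixes f g :: "real \<Rightarrow> 'c::euclidean_space"
  assumes ab: "a < b" and w: "wd {a<..<b} f g"
  shows "\<exists>C. AE x in lborel. x \<in> {a<..<b} \<longrightarrow> f x = C + indef a g x"
proof -
  have gi: "set_integrable lborel {a<..<b} g" and fi: "set_integrable lborel {a<..<b} f"
    using w unfolding wd_def by auto
  have wG: "wd {a<..<b} (\<lambda>t. 0 + indef a g t) g" by (rule ac_wd[OF ab gi]) simp
  then have Gi: "set_integrable lborel {a<..<b} (\<lambda>t. 0 + indef a g t)" unfolding wd_def by auto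
  have "\<exists>C. AE x in lborel. x \<in> {a<..<b} \<longrightarrow> f x - (0 + indef a g x) = C"
  proof (rule du_bois_reymond[OF ab])
    show "set_integrable lborel {a<..<b} (\<lambda>x. f x - (0 + indef a g x))" using fi Gi by auto
    fix \<psi> assume tf: "test_fun {a<..<b} \<psi>"
    have di: "set_integrable lborel {a<..<b} (\<lambda>x. deriv \<psi> x *\<^sub>R h x)" if "set_integrable lborel {a<..<b} h" for h :: "real \<Rightarrow> 'c"
      by (rule set_integrable_bilinear_cont[OF bounded_bilinear_scaleR test_deriv_cont[OF tf] that, of a b]) auto
    have "(LINT x:{a<..<b}|lborel. deriv \<psi> x *\<^sub>R (f x - (0 + indef a g x)))
        = (LINT x:{a<..<b}|lborel. deriv \<psi> x *\<^sub>R f x) - (LINT x:{a<..<b}|lborel. deriv \<psi> x *\<^sub>R (0 + indef a g x))"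
      unfolding scaleR_right_diff_distrib by (rule set_integral_diff(2)[OF di[OF fi] di[OF Gi]])
    also have "\<dots> = 0" using w wG tf unfolding wd_def by auto
    finally show "(LINT x:{a<..<b}|lborel. deriv \<psi> x *\<^sub>R (f x - (0 + indef a g x))) = 0" .
  qed
  then obtain C where "AE x in lborel. x \<in> {a<..<b} \<longrightarrow> f x - (0 + indef a g x) = C" by blast
  then have "AE x in lborel. x \<in> {a<..<b} \<longrightarrow> f x = C + indef a g x"
    by (rule AE_mp) (auto intro!: AE_I2 simp: algebra_simps)
  then show ?thesis by blast
qed

lemma wd_cong_AE:
  fixes F T q :: "real \<Rightarrow> 'c::euclidean_space"
  assumes ab: "a < b" and w: "wd {a<..<b} F q" and Tm: "set_borel_measurable lborel {a<..<b} T"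
    and ae: "AE x in lborel. x \<in> {a<..<b} \<longrightarrow> T x = F x"
  shows "wd {a<..<b} T q"
proof -
  have Fi: "set_integrable lborel {a<..<b} F" using w unfolding wd_def by auto
  have Ti: "set_integrable lborel {a<..<b} T"
    using set_integrable_cong_AE[OF Tm set_integrable_imp_meas[OF Fi] ae] Fi by simp
  have "(LINT x:{a<..<b}|lborel. deriv \<psi> x *\<^sub>R T x) = (LINT x:{a<..<b}|lborel. deriv \<psi> x *\<^sub>R F x)"
    if tf: "test_fun {a<..<b} \<psi>" for \<psi>
  proof (rule set_lint_cong_AE)
    show "set_borel_measurable lborel {a<..<b} (\<lambda>x. deriv \<psi> x *\<^sub>R T x)"
      "set_borel_measurable lborel {a<..<b} (\<lambda>x. deriv \<psi> x *\<^sub>R F x)"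
      by (intro set_integrable_imp_meas set_integrable_bilinear_cont[where a=a and b=b, OF bounded_bilinear_scaleR test_deriv_cont[OF tf]] Ti Fi; auto)+
    show "AE x in lborel. x \<in> {a<..<b} \<longrightarrow> deriv \<psi> x *\<^sub>R T x = deriv \<psi> x *\<^sub>R F x"
      using ae by (auto elim!: AE_mp)
  qed
  then show ?thesis using w Ti unfolding wd_def by auto
qed

lemma cross_cross_right: "cross3 (cross3 a b) c = inner a c *\<^sub>R b - inner b c *\<^sub>R a" for a b c :: "real^3"
  unfolding vec_eq_iff forall_3 by (simp add: cross_components inner_vec_def sum_3 algebra_simps)
lemma cross_identity:
  fixes p V \<Phi> g :: "real^3"
  shows "inner (cross3 (cross3 p V + cross3 \<Phi> g) V + cross3 (cross3 \<Phi> V) g) g =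
    inner p V * inner V g - inner V V * inner p g + inner \<Phi> V * inner g g - inner g V * inner \<Phi> g"
proof -
  have e: "cross3 (cross3 p V + cross3 \<Phi> g) V + cross3 (cross3 \<Phi> V) g
     = (inner p V *\<^sub>R V - inner V V *\<^sub>R p) + (inner \<Phi> V *\<^sub>R g - inner g V *\<^sub>R \<Phi>) + (inner \<Phi> g *\<^sub>R V - inner V g *\<^sub>R \<Phi>)"
    by (simp only: cross_add_left cross_cross_right)
  show ?thesis unfolding e by (simp add: inner_add_left inner_diff_left algebra_simps)
qed

lemma norm_cross_le: "norm (cross3 x y) \<le> norm x * norm y" for x y :: "real^3"
proof -
  have "(norm (cross3 x y))\<^sup>2 \<le> (norm x * norm y)\<^sup>2"
    using norm_cross_dot[of x y] by (metis le_add_same_cancel1 zero_le_power2)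
  then show ?thesis by (simp add: power2_le_iff_abs_le)
qed

lemma bounded_bilinear_cross3: "bounded_bilinear (cross3 :: real^3 \<Rightarrow> real^3 \<Rightarrow> real^3)"
  using bilinear_cross bilinear_conv_bounded_bilinear by blast

lemma smb_norm2:
  fixes f :: "_ \<Rightarrow> 'c::euclidean_space"
  assumes "set_borel_measurable M A f"
  shows "set_borel_measurable M A (\<lambda>x. (norm (f x))\<^sup>2)"
  using set_borel_measurable_bilinear[OF bounded_bilinear_inner assms assms]
  by (simp add: power2_norm_eq_inner)

lemma prod_le_sq: "(x::real) \<ge> 0 \<Longrightarrow> y \<ge> 0 \<Longrightarrow> x * y \<le> x\<^sup>2 + y\<^sup>2"
proof -
  assume "x \<ge> 0" "y \<ge> 0"
  have "0 \<le> (x - y)\<^sup>2" by simp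
  then have "2 * (x * y) \<le> x\<^sup>2 + y\<^sup>2" by (simp add: power2_diff)
  moreover have "x * y \<ge> 0" using \<open>x \<ge> 0\<close> \<open>y \<ge> 0\<close> by simp
  ultimately show ?thesis by linarith
qed

lemma sum_sq_le: "(x + y)\<^sup>2 \<le> 2 * (x\<^sup>2 + y\<^sup>2)" for x y :: real
proof -
  have "0 \<le> (x - y)\<^sup>2" by simp
  then show ?thesis by (simp add: power2_diff power2_sum)
qed

theorem proposition7p2:
  fixes a b :: real and v g \<phi> \<phi>' :: "real \<Rightarrow> real^3"
  assumes "a < b"
    and "H1_grad {a<..<b} v g"
    and "AE x in lborel. x \<in> {a<..<b} \<longrightarrow> norm (v x) = 1"
    and "H1_grad {a<..<b} \<phi> \<phi>'"
  shows "(\<exists>w. H1_grad {a<..<b} (\<lambda>x. cross3 (cross3 (\<phi> x) (v x)) (v x)) w) \<and>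
    (\<forall>w. weak_deriv {a<..<b} (\<lambda>x. cross3 (cross3 (\<phi> x) (v x)) (v x)) w \<longrightarrow>
       - (LINT x:{a<..<b}|lborel. inner (w x) (g x))
       = (LINT x:{a<..<b}|lborel. inner (g x) (\<phi>' x))
         - (LINT x:{a<..<b}|lborel. (norm (g x))\<^sup>2 * inner (v x) (\<phi> x)))"
proof -
  note ab = assms(1) and unit = assms(3)
  have cr: "bounded_bilinear (cross3 :: real^3 \<Rightarrow> real^3 \<Rightarrow> real^3)" by (rule bounded_bilinear_cross3)
  have L2v: "L2 {a<..<b} v" and L2g: "L2 {a<..<b} g" and wdv: "wd {a<..<b} v g"
    using assms(2) unfolding H1_grad_def weak_deriv_wd by auto
  have L2p: "L2 {a<..<b} \<phi>" and L2p': "L2 {a<..<b} \<phi>'" and wdp: "wd {a<..<b} \<phi> \<phi>'"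
    using assms(4) unfolding H1_grad_def weak_deriv_wd by auto
  have gS: "set_integrable lborel {a<..<b} g" and p'S: "set_integrable lborel {a<..<b} \<phi>'"
    using wdv wdp unfolding wd_def by auto
  have gI: "set_integrable lborel {a..b} g" and p'I: "set_integrable lborel {a..b} \<phi>'"
    using gS p'S set_integrable_Icc_Ioo by blast+
  have vm: "set_borel_measurable lborel {a<..<b} v" and gm: "set_borel_measurable lborel {a<..<b} g"
    and pm: "set_borel_measurable lborel {a<..<b} \<phi>" and p'm: "set_borel_measurable lborel {a<..<b} \<phi>'"
    using L2v L2g L2p L2p' unfolding L2_def by auto
  have g2: "set_integrable lborel {a<..<b} (\<lambda>x. (norm (g x))\<^sup>2)"
    and p'2: "set_integrable lborel {a<..<b} (\<lambda>x. (norm (\<phi>' x))\<^sup>2)"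
    using L2g L2p' unfolding L2_def by auto
  obtain Cv where aev: "AE x in lborel. x \<in> {a<..<b} \<longrightarrow> v x = Cv + indef a g x"
    using wd_rep[OF ab wdv] by blast
  obtain Cp where aep: "AE x in lborel. x \<in> {a<..<b} \<longrightarrow> \<phi> x = Cp + indef a \<phi>' x"
    using wd_rep[OF ab wdp] by blast
  define V where "V t = Cv + indef a g t" for t
  define \<Phi> where "\<Phi> t = Cp + indef a \<phi>' t" for t
  have Vc: "continuous_on {a..b} V" unfolding V_def[abs_def]
    by (intro continuous_intros indef_cont[OF gI])
  have \<Phi>c: "continuous_on {a..b} \<Phi>" unfolding \<Phi>_def[abs_def]
    by (intro continuous_intros indef_cont[OF p'I])
  define p where "p t = cross3 (\<phi>' t) (V t) + cross3 (\<Phi> t) (g t)" for t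
  define P where "P t = cross3 (\<Phi> t) (V t)" for t
  have pI: "set_integrable lborel {a..b} p" unfolding p_def
    by (intro set_integral_add(1) set_integrable_bilinear_cont'[OF cr Vc p'I]
        set_integrable_bilinear_cont[OF cr \<Phi>c gI]) auto
  have Prep: "P x = cross3 Cp Cv + indef a p x" if x: "x \<in> {a..b}" for x
  proof -
    have "cross3 (\<Phi> x) (V x) = cross3 Cp Cv + (LINT t:{a..x}|lborel. cross3 (\<phi>' t) (V t) + cross3 (\<Phi> t) (g t))"
      by (rule product_rule[OF cr _ set_integrable_subset[OF p'I] set_integrable_subset[OF gI]])
        (use x in \<open>auto simp: V_def \<Phi>_def\<close>)
    then show ?thesis by (simp add: P_def p_def indef_def)
  qed
  have Pc: "continuous_on {a..b} P"
  proof -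
    have "continuous_on {a..b} (\<lambda>x. cross3 Cp Cv + indef a p x)"
      by (intro continuous_intros indef_cont[OF pI])
    then show ?thesis by (rule continuous_on_eq) (use Prep in auto)
  qed
  define q where "q t = cross3 (p t) (V t) + cross3 (P t) (g t)" for t
  have qI: "set_integrable lborel {a..b} q" unfolding q_def
    by (intro set_integral_add(1) set_integrable_bilinear_cont'[OF cr Vc pI]
        set_integrable_bilinear_cont[OF cr Pc gI]) auto
  have qS: "set_integrable lborel {a<..<b} q" using qI set_integrable_Icc_Ioo by blast
  define F where "F t = cross3 (P t) (V t)" for t
  have Frep: "F x = cross3 (cross3 Cp Cv) Cv + indef a q x" if x: "x \<in> {a..b}" for x
  proof -
    have "cross3 (P x) (V x) = cross3 (cross3 Cp Cv) Cv + (LINT t:{a..x}|lborel. cross3 (p t) (V t) + cross3 (P t) (g t))"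
      by (rule product_rule[OF cr _ set_integrable_subset[OF pI] set_integrable_subset[OF gI]])
        (use x Prep in \<open>auto simp: V_def\<close>)
    then show ?thesis by (simp add: F_def q_def indef_def)
  qed
  have wdF: "wd {a<..<b} F q" by (rule ac_wd[OF ab qS Frep])
  define T where "T x = cross3 (cross3 (\<phi> x) (v x)) (v x)" for x
  have Tm: "set_borel_measurable lborel {a<..<b} T"
    unfolding T_def by (intro set_borel_measurable_bilinear[OF cr] pm vm)
  have aeT: "AE x in lborel. x \<in> {a<..<b} \<longrightarrow> T x = F x"
    using aev aep by eventually_elim (auto simp: T_def F_def P_def V_def \<Phi>_def)
  have wdT: "wd {a<..<b} T q" by (rule wd_cong_AE[OF ab wdF Tm aeT])
  obtain M1 where M1: "M1 \<ge> 0" "\<And>x. x \<in> {a..b} \<Longrightarrow> norm (V x) \<le> M1" using continuous_bounded_Icc[OF Vc] by blast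
  obtain M2 where M2: "M2 \<ge> 0" "\<And>x. x \<in> {a..b} \<Longrightarrow> norm (\<Phi> x) \<le> M2" using continuous_bounded_Icc[OF \<Phi>c] by blast
  obtain M3 where M3: "M3 \<ge> 0" "\<And>x. x \<in> {a..b} \<Longrightarrow> norm (P x) \<le> M3" using continuous_bounded_Icc[OF Pc] by blast
  define M where "M = M1 + M2 + M3"
  have MV: "norm (V x) \<le> M" "norm (\<Phi> x) \<le> M" "norm (P x) \<le> M" if "x \<in> {a..b}" for x
  proof -
    have "norm (V x) \<le> M1" "norm (\<Phi> x) \<le> M2" "norm (P x) \<le> M3"
      using M1(2)[OF that] M2(2)[OF that] M3(2)[OF that] by auto
    then show "norm (V x) \<le> M" "norm (\<Phi> x) \<le> M" "norm (P x) \<le> M"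
      using M1(1) M2(1) M3(1) unfolding M_def by linarith+
  qed
  have M0: "M \<ge> 0" using M1 M2 M3 by (simp add: M_def)
  have part1: "H1_grad {a<..<b} T q"
  proof -
    have Fc: "continuous_on {a..b} F" unfolding F_def[abs_def] by (intro continuous_on_cross Pc Vc)
    have F2: "set_integrable lborel {a<..<b} (\<lambda>x. (norm (F x))\<^sup>2)"
      by (rule set_integrable_cont_Icc[of a b]) (auto intro!: continuous_intros Fc)
    have T2: "set_integrable lborel {a<..<b} (\<lambda>x. (norm (T x))\<^sup>2)"
    proof (subst set_integrable_cong_AE)
      show "set_borel_measurable lborel {a<..<b} (\<lambda>x. (norm (T x))\<^sup>2)" by (rule smb_norm2[OF Tm])
      show "set_borel_measurable lborel {a<..<b} (\<lambda>x. (norm (F x))\<^sup>2)"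
        by (rule set_integrable_imp_meas[OF F2])
      show "AE x in lborel. x \<in> {a<..<b} \<longrightarrow> (norm (T x))\<^sup>2 = (norm (F x))\<^sup>2"
        using aeT by eventually_elim auto
    qed (rule F2)
    have qm: "set_borel_measurable lborel {a<..<b} q" by (rule set_integrable_imp_meas[OF qS])
    define K where "K = M * M + M"
    have qb: "norm (q x) \<le> K * (norm (\<phi>' x) + norm (g x))" if x: "x \<in> {a..b}" for x
    proof -
      have "norm (p x) \<le> norm (\<phi>' x) * M + M * norm (g x)"
        unfolding p_def using MV[OF x] norm_cross_le
        by (meson add_mono mult_left_mono mult_right_mono norm_ge_zero norm_triangle_ineq order.trans)
      then have "norm (q x) \<le> (norm (\<phi>' x) * M + M * norm (g x)) * M + M * norm (g x)"
        unfolding q_def using MV[OF x] norm_cross_le M0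
        by (meson add_mono mult_mono mult_right_mono norm_ge_zero norm_triangle_ineq order.trans)
      also have "\<dots> \<le> K * (norm (\<phi>' x) + norm (g x))"
        using M0 by (simp add: K_def algebra_simps)
      finally show ?thesis .
    qed
    have q2: "set_integrable lborel {a<..<b} (\<lambda>x. (norm (q x))\<^sup>2)"
    proof (rule set_integrable_bound[OF _ smb_norm2[OF qm]])
      show "set_integrable lborel {a<..<b} (\<lambda>x. 2 * K\<^sup>2 * ((norm (\<phi>' x))\<^sup>2 + (norm (g x))\<^sup>2))"
        using p'2 g2 by (intro set_integrable_mult_right set_integral_add(1))
      show "AE x in lborel. x \<in> {a<..<b} \<longrightarrow> norm ((norm (q x))\<^sup>2) \<le> norm (2 * K\<^sup>2 * ((norm (\<phi>' x))\<^sup>2 + (norm (g x))\<^sup>2))"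
      proof (intro AE_I2 impI)
        fix x assume "x \<in> {a<..<b}"
        then have "norm (q x) \<le> K * (norm (\<phi>' x) + norm (g x))" using qb by auto
        then have "(norm (q x))\<^sup>2 \<le> (K * (norm (\<phi>' x) + norm (g x)))\<^sup>2"
          by (intro power_mono) auto
        also have "\<dots> = K\<^sup>2 * (norm (\<phi>' x) + norm (g x))\<^sup>2" by (simp add: power_mult_distrib)
        also have "\<dots> \<le> K\<^sup>2 * (2 * ((norm (\<phi>' x))\<^sup>2 + (norm (g x))\<^sup>2))"
          by (intro mult_left_mono sum_sq_le) auto
        finally show "norm ((norm (q x))\<^sup>2) \<le> norm (2 * K\<^sup>2 * ((norm (\<phi>' x))\<^sup>2 + (norm (g x))\<^sup>2))"
          by (simp add: algebra_simps)
      qed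
    qed
    show ?thesis unfolding H1_grad_def L2_def weak_deriv_wd
      using Tm T2 qm q2 wdT by auto
  qed
  have part2: "- (LINT x:{a<..<b}|lborel. inner (w x) (g x))
       = (LINT x:{a<..<b}|lborel. inner (g x) (\<phi>' x))
         - (LINT x:{a<..<b}|lborel. (norm (g x))\<^sup>2 * inner (v x) (\<phi> x))"
    if "weak_deriv {a<..<b} T w" for w
  proof -
    have wdw: "wd {a<..<b} T w" using that unfolding weak_deriv_wd .
    have wS: "set_integrable lborel {a<..<b} w" using wdw unfolding wd_def by auto
    have aew: "AE x in lborel. x \<in> {a<..<b} \<longrightarrow> w x = q x"
      by (rule wd_unique[OF ab wdw wdT]) simp
    have unitV: "AE x in lborel. x \<in> {a<..<b} \<longrightarrow> norm (V x) = 1"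
      using unit aev by eventually_elim (auto simp: V_def)
    have orthV: "AE x in lborel. x \<in> {a<..<b} \<longrightarrow> inner (V x) (g x) = 0"
    proof -
      define N where "N t = inner (V t) (V t)" for t
      define n where "n t = inner (g t) (V t) + inner (V t) (g t)" for t
      have nI: "set_integrable lborel {a..b} n" unfolding n_def
        by (intro set_integral_add(1) set_integrable_bilinear_cont'[OF bounded_bilinear_inner Vc gI]
            set_integrable_bilinear_cont[OF bounded_bilinear_inner Vc gI]) auto
      have nS: "set_integrable lborel {a<..<b} n" using nI set_integrable_Icc_Ioo by blast
      have Nrep: "N x = inner Cv Cv + indef a n x" if x: "x \<in> {a..b}" for x
      proof -
        have "inner (V x) (V x) = inner Cv Cv + (LINT t:{a..x}|lborel. inner (g t) (V t) + inner (V t) (g t))"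
          by (rule product_rule[OF bounded_bilinear_inner _ set_integrable_subset[OF gI] set_integrable_subset[OF gI]])
            (use x in \<open>auto simp: V_def\<close>)
        then show ?thesis by (simp add: N_def n_def indef_def)
      qed
      have wdN: "wd {a<..<b} N n" by (rule ac_wd[OF ab nS Nrep])
      have wd1: "wd {a<..<b} (\<lambda>_. 1::real) (\<lambda>_. 0)"
        by (rule ac_wd[OF ab]) (auto simp: indef_def set_integrable_def)
      have aeN: "AE x in lborel. x \<in> {a<..<b} \<longrightarrow> N x = 1"
        using unitV by eventually_elim (auto simp: N_def power2_norm_eq_inner[symmetric])
      have "AE x in lborel. x \<in> {a<..<b} \<longrightarrow> n x = 0"
        by (rule wd_unique[OF ab wdN wd1 aeN])
      then show ?thesis by eventually_elim (auto simp: n_def inner_commute)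
    qed
    have alg: "AE x in lborel. x \<in> {a<..<b} \<longrightarrow>
        inner (q x) (g x) = (norm (g x))\<^sup>2 * inner (v x) (\<phi> x) - inner (g x) (\<phi>' x)"
      using unitV orthV aev aep
    proof eventually_elim
      case (elim x)
      show ?case
      proof
        assume x: "x \<in> {a<..<b}"
        have "inner (q x) (g x) = inner (\<phi>' x) (V x) * inner (V x) (g x) - inner (V x) (V x) * inner (\<phi>' x) (g x)
            + inner (\<Phi> x) (V x) * inner (g x) (g x) - inner (g x) (V x) * inner (\<Phi> x) (g x)"
          unfolding q_def p_def P_def by (rule cross_identity)
        also have "\<dots> = inner (\<Phi> x) (V x) * inner (g x) (g x) - inner (\<phi>' x) (g x)"
        proof -
          have vv: "inner (V x) (V x) = 1" using elim x by (metis power2_norm_eq_inner power_one)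
          have vg: "inner (V x) (g x) = 0" using elim x by blast
          then have gv: "inner (g x) (V x) = 0" by (simp only: inner_commute)
          show ?thesis by (simp add: vv vg gv)
        qed
        also have "\<dots> = (norm (g x))\<^sup>2 * inner (v x) (\<phi> x) - inner (g x) (\<phi>' x)"
        proof -
          have "v x = V x" "\<phi> x = \<Phi> x" using elim x by (auto simp: V_def \<Phi>_def)
          then show ?thesis
            by (simp add: power2_norm_eq_inner inner_commute[of "\<phi>' x" "g x"] inner_commute[of "\<Phi> x" "V x"] mult.commute)
        qed
        finally show "inner (q x) (g x) = (norm (g x))\<^sup>2 * inner (v x) (\<phi> x) - inner (g x) (\<phi>' x)" .
      qed
    qed
    have Xm: "set_borel_measurable lborel {a<..<b} (\<lambda>x. inner (g x) (\<phi>' x))"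
      by (rule set_borel_measurable_bilinear[OF bounded_bilinear_inner gm p'm])
    have Ym: "set_borel_measurable lborel {a<..<b} (\<lambda>x. (norm (g x))\<^sup>2 * inner (v x) (\<phi> x))"
      by (rule set_borel_measurable_bilinear[OF bounded_bilinear_mult smb_norm2[OF gm]
            set_borel_measurable_bilinear[OF bounded_bilinear_inner vm pm]])
    have XI: "set_integrable lborel {a<..<b} (\<lambda>x. inner (g x) (\<phi>' x))"
    proof (rule set_integrable_bound[OF _ Xm])
      show "set_integrable lborel {a<..<b} (\<lambda>x. (norm (g x))\<^sup>2 + (norm (\<phi>' x))\<^sup>2)"
        using g2 p'2 by (rule set_integral_add(1))
      show "AE x in lborel. x \<in> {a<..<b} \<longrightarrow> norm (inner (g x) (\<phi>' x)) \<le> norm ((norm (g x))\<^sup>2 + (norm (\<phi>' x))\<^sup>2)"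
      proof (intro AE_I2 impI)
        fix x
        have "\<bar>inner (g x) (\<phi>' x)\<bar> \<le> norm (g x) * norm (\<phi>' x)" by (rule Cauchy_Schwarz_ineq2)
        also have "\<dots> \<le> (norm (g x))\<^sup>2 + (norm (\<phi>' x))\<^sup>2" by (rule prod_le_sq) auto
        finally show "norm (inner (g x) (\<phi>' x)) \<le> norm ((norm (g x))\<^sup>2 + (norm (\<phi>' x))\<^sup>2)" by simp
      qed
    qed
    have YI: "set_integrable lborel {a<..<b} (\<lambda>x. (norm (g x))\<^sup>2 * inner (v x) (\<phi> x))"
    proof (rule set_integrable_bound[OF _ Ym])
      show "set_integrable lborel {a<..<b} (\<lambda>x. (M * M) * (norm (g x))\<^sup>2)"
        using g2 by (rule set_integrable_mult_right)
      show "AE x in lborel. x \<in> {a<..<b} \<longrightarrow> norm ((norm (g x))\<^sup>2 * inner (v x) (\<phi> x)) \<le> norm ((M * M) * (norm (g x))\<^sup>2)"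
        using aev aep
      proof eventually_elim
        case (elim x)
        show ?case
        proof
          assume x: "x \<in> {a<..<b}"
          then have "\<bar>inner (v x) (\<phi> x)\<bar> \<le> M * M"
            using elim Cauchy_Schwarz_ineq2[of "v x" "\<phi> x"] MV[of x] M0
            by (auto simp: V_def \<Phi>_def intro: order.trans[OF _ mult_mono])
          then show "norm ((norm (g x))\<^sup>2 * inner (v x) (\<phi> x)) \<le> norm ((M * M) * (norm (g x))\<^sup>2)"
          proof -
            assume h0: "\<bar>inner (v x) (\<phi> x)\<bar> \<le> M * M"
            have h: "(norm (g x))\<^sup>2 * \<bar>inner (v x) (\<phi> x)\<bar> \<le> (norm (g x))\<^sup>2 * (M * M)"
              using h0 by (intro mult_left_mono) auto
            have e1: "norm ((norm (g x))\<^sup>2 * inner (v x) (\<phi> x)) = (norm (g x))\<^sup>2 * \<bar>inner (v x) (\<phi> x)\<bar>"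
              by (simp add: abs_mult)
            have e2: "norm ((M * M) * (norm (g x))\<^sup>2) = (norm (g x))\<^sup>2 * (M * M)"
              using M0 by simp
            show ?thesis unfolding e1 e2 using h .
          qed
        qed
      qed
    qed
    have "(LINT x:{a<..<b}|lborel. inner (w x) (g x)) = (LINT x:{a<..<b}|lborel. inner (q x) (g x))"
      by (rule set_lint_cong_AE[OF set_borel_measurable_bilinear[OF bounded_bilinear_inner set_integrable_imp_meas[OF wS] gm]
            set_borel_measurable_bilinear[OF bounded_bilinear_inner set_integrable_imp_meas[OF qS] gm]])
        (use aew in \<open>eventually_elim, auto\<close>)
    also have "\<dots> = (LINT x:{a<..<b}|lborel. (norm (g x))\<^sup>2 * inner (v x) (\<phi> x) - inner (g x) (\<phi>' x))"
      by (rule set_lint_cong_AE[OF set_borel_measurable_bilinear[OF bounded_bilinear_inner set_integrable_imp_meas[OF qS] gm]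
            set_integrable_imp_meas[OF set_integral_diff(1)[OF YI XI]] alg])
    also have "\<dots> = (LINT x:{a<..<b}|lborel. (norm (g x))\<^sup>2 * inner (v x) (\<phi> x)) - (LINT x:{a<..<b}|lborel. inner (g x) (\<phi>' x))"
      by (rule set_integral_diff(2)[OF YI XI])
    finally show ?thesis by simp
  qed
  show ?thesis
    using part1 part2 unfolding T_def by blast
qed

end
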